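(* Let $n\ge2$ and let $\gamma:I\to\mathbb{R}^2$ be a $C^\infty$ curve with $0\in I$. Then $\gamma'(0)=\cdots=\gamma^{(n-1)}(0)=\mathbf{0}$ and $\det(\gamma^{(n)}(0),\gamma^{(n+1)}(0))\neq0$ if and only if there is a real number $T$ such that $\gamma$ is $\mathcal{A}$-equivalent at $s=0$ to $\tilde\gamma(s)=(s^n,\ s^{n+1}+Ts^{n+3})+h(s)$, where $h$ is an $\mathbb{R}^2$-valued $C^\infty$ function with $h(0)=h'(0)=\cdots=h^{(n+3)}(0)=\mathbf{0}$.
   Context: $\mathcal{A}$-equivalence of curve germs: existence of $C^\infty$ diffeomorphism germs $\psi$ of $(\mathbb{R},0)$ and $\Psi$ of $\mathbb{R}^2$ with $\Psi\circ\gamma_1\circ\psi^{-1}=\gamma_2$. *)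

theory Defs
  imports "HOL-Analysis.Analysis"
begin

fun Ck_on :: "nat \<Rightarrow> 'a::real_normed_vector set \<Rightarrow> ('a \<Rightarrow> 'b::real_normed_vector) \<Rightarrow> bool" where
  "Ck_on 0 S f = continuous_on S f"
| "Ck_on (Suc k) S f =
     ((\<forall>x\<in>S. f differentiable (at x)) \<and>
      (\<forall>v. Ck_on k S (\<lambda>x. frechet_derivative f (at x) v)))"

definition smooth_on :: "'a::real_normed_vector set \<Rightarrow> ('a \<Rightarrow> 'b::real_normed_vector) \<Rightarrow> bool" where
  "smooth_on S f \<longleftrightarrow> (\<forall>k. Ck_on k S f)"

fun nth_deriv :: "nat \<Rightarrow> (real \<Rightarrow> 'b::real_normed_vector) \<Rightarrow> real \<Rightarrow> 'b" where
  "nth_deriv 0 f = f"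
| "nth_deriv (Suc k) f = (\<lambda>t. vector_derivative (nth_deriv k f) (at t))"

definition det2 :: "real \<times> real \<Rightarrow> real \<times> real \<Rightarrow> real" where
  "det2 u v = fst u * snd v - snd u * fst v"

definition local_diffeo_at ::
  "'a::real_normed_vector \<Rightarrow> ('a \<Rightarrow> 'a) \<Rightarrow> ('a \<Rightarrow> 'a) \<Rightarrow> bool" where
  "local_diffeo_at p Phi Phii \<longleftrightarrow>
     (\<exists>U V. open U \<and> p \<in> U \<and> open V \<and> Phi ` U = V \<and> Phii ` V = U \<and>
        smooth_on U Phi \<and> smooth_on V Phii \<and>
        (\<forall>x\<in>U. Phii (Phi x) = x) \<and> (\<forall>y\<in>V. Phi (Phii y) = y))"

text \<open>A-equivalence of curve germs at s = 0: there are diffeomorphism germs psi of (R,0)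
  and Psi of R^2 (at gamma1 0) with Psi o gamma1 o psi^-1 = gamma2 near 0.\<close>
definition A_equiv_at0 :: "(real \<Rightarrow> real \<times> real) \<Rightarrow> (real \<Rightarrow> real \<times> real) \<Rightarrow> bool" where
  "A_equiv_at0 g1 g2 \<longleftrightarrow>
     (\<exists>psi psii Psi Psii.
        psi 0 = 0 \<and> local_diffeo_at 0 psi psii \<and>
        local_diffeo_at (g1 0) Psi Psii \<and>
        (\<forall>\<^sub>F s in nhds 0. Psi (g1 (psii s)) = g2 s))"

end

theory Submission
  imports Defs
begin

fun Ck1 :: "nat \<Rightarrow> real set \<Rightarrow> (real \<Rightarrow> 'b::real_normed_vector) \<Rightarrow> bool" where
  "Ck1 0 S f = continuous_on S f"
| "Ck1 (Suc k) S f = (\<exists>f'. (\<forall>x\<in>S. (f has_vector_derivative f' x) (at x)) \<and> Ck1 k S f')"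

lemma Ck1_cong:
  assumes "open S" "\<And>x. x \<in> S \<Longrightarrow> f x = g x" "Ck1 k S f"
  shows "Ck1 k S g"
  using assms
proof (induction k arbitrary: f g)
  case 0
  then show ?case using continuous_on_cong by (metis Ck1.simps(1))
next
  case (Suc k)
  then obtain f' where d: "\<forall>x\<in>S. (f has_vector_derivative f' x) (at x)" and c: "Ck1 k S f'" by auto
  have "\<forall>x\<in>S. (g has_vector_derivative f' x) (at x)"
    using d Suc.prems(1,2) has_vector_derivative_transform_within_open by metis
  then show ?case using c by auto
qed

lemma Ck1_Suc_imp: "Ck1 (Suc k) S f \<Longrightarrow> Ck1 k S f"
proof (induction k arbitrary: f)
  case 0
  then obtain f' where d: "\<forall>x\<in>S. (f has_vector_derivative f' x) (at x)" by auto
  then have "\<forall>x\<in>S. isCont f x"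
    using has_vector_derivative_continuous by blast
  then show ?case by (simp add: continuous_at_imp_continuous_on)
next
  case (Suc k)
  then obtain f' where d: "\<forall>x\<in>S. (f has_vector_derivative f' x) (at x)" and c: "Ck1 (Suc k) S f'"
    by (metis Ck1.simps(2))
  then show ?case using Suc.IH by auto
qed

lemma Ck1_le: "k \<le> m \<Longrightarrow> Ck1 m S f \<Longrightarrow> Ck1 k S f"
proof (induction m)
  case 0 then show ?case by simp
next
  case (Suc m)
  then show ?case using Ck1_Suc_imp le_Suc_eq by blast
qed

lemma Ck1_cont: "Ck1 k S f \<Longrightarrow> continuous_on S f"
  using Ck1_le[of 0 k] by simp

lemma Ck1_subset: "T \<subseteq> S \<Longrightarrow> Ck1 k S f \<Longrightarrow> Ck1 k T f"
proof (induction k arbitrary: f)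
  case 0 then show ?case using continuous_on_subset by auto
next
  case (Suc k)
  then show ?case by (metis Ck1.simps(2) subsetD)
qed

lemma Ck1_const: "Ck1 k S (\<lambda>x. c)"
proof (induction k arbitrary: c)
  case 0 then show ?case by simp
next
  case (Suc k)
  have "\<forall>x\<in>S. ((\<lambda>x. c) has_vector_derivative 0) (at x)"
    by (auto intro: derivative_eq_intros)
  then show ?case using Suc[of 0] unfolding Ck1.simps by (intro exI[of _ "\<lambda>x. 0"]) auto
qed

lemma Ck1_add: "Ck1 k S f \<Longrightarrow> Ck1 k S g \<Longrightarrow> Ck1 k S (\<lambda>x. f x + g x)"
proof (induction k arbitrary: f g)
  case 0 then show ?case by (simp add: continuous_on_add)
next
  case (Suc k)
  then obtain f' g' where "\<forall>x\<in>S. (f has_vector_derivative f' x) (at x)" "Ck1 k S f'"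
    "\<forall>x\<in>S. (g has_vector_derivative g' x) (at x)" "Ck1 k S g'" by auto
  then show ?case using Suc.IH
    by (auto intro!: exI[of _ "\<lambda>x. f' x + g' x"] has_vector_derivative_add)
qed

lemma Ck1_scaleR:
  fixes f :: "real \<Rightarrow> real" and g :: "real \<Rightarrow> 'b::real_normed_vector"
  shows "Ck1 k S f \<Longrightarrow> Ck1 k S g \<Longrightarrow> Ck1 k S (\<lambda>x. f x *\<^sub>R g x)"
proof (induction k arbitrary: f g)
  case 0 then show ?case by (simp add: continuous_on_scaleR)
next
  case (Suc k)
  then obtain f' g' where fd: "\<forall>x\<in>S. (f has_vector_derivative f' x) (at x)" and f'c: "Ck1 k S f'"
    and gd: "\<forall>x\<in>S. (g has_vector_derivative g' x) (at x)" and g'c: "Ck1 k S g'" by auto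
  have fc: "Ck1 k S f" "Ck1 k S g" using Suc.prems Ck1_Suc_imp by blast+
  have "\<forall>x\<in>S. ((\<lambda>x. f x *\<^sub>R g x) has_vector_derivative (f x *\<^sub>R g' x + f' x *\<^sub>R g x)) (at x)"
    using fd gd has_vector_derivative_scaleR[of f _ _ _ g] by (auto simp: has_real_derivative_iff_has_vector_derivative)
  moreover have "Ck1 k S (\<lambda>x. f x *\<^sub>R g' x + f' x *\<^sub>R g x)"
    using Suc.IH fc f'c g'c by (intro Ck1_add) auto
  ultimately show ?case by auto
qed

lemma Ck1_mult:
  fixes f g :: "real \<Rightarrow> real"
  shows "Ck1 k S f \<Longrightarrow> Ck1 k S g \<Longrightarrow> Ck1 k S (\<lambda>x. f x * g x)"
  using Ck1_scaleR[of k S f g] by simp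

lemma Ck1_cscale: "Ck1 k S g \<Longrightarrow> Ck1 k S (\<lambda>x. c *\<^sub>R g x)"
  using Ck1_scaleR[OF Ck1_const] by blast

lemma Ck1_uminus: "Ck1 k S g \<Longrightarrow> Ck1 k S (\<lambda>x. - g x)"
  using Ck1_cscale[of k S g "-1"] by simp

lemma Ck1_diff: "Ck1 k S f \<Longrightarrow> Ck1 k S g \<Longrightarrow> Ck1 k S (\<lambda>x. f x - g x)"
  using Ck1_add[of k S f "\<lambda>x. - g x"] Ck1_uminus by fastforce

lemma Ck1_id: "Ck1 k S (\<lambda>x. x)"
proof (cases k)
  case 0 then show ?thesis by (simp add: continuous_on_id)
next
  case (Suc m)
  have "\<forall>x\<in>S. ((\<lambda>x. x) has_vector_derivative (1::real)) (at x)"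
    by (auto intro: derivative_eq_intros)
  then have "Ck1 (Suc m) S (\<lambda>x. x)" using Ck1_const[of m S 1] unfolding Ck1.simps by (intro exI[of _ "\<lambda>x. 1"]) auto
  then show ?thesis using Suc by simp
qed

lemma Ck1_pow: "Ck1 k S (\<lambda>x::real. x ^ j)"
  by (induction j) (auto intro: Ck1_mult Ck1_id Ck1_const)

lemma Ck1_Pair:
  fixes f g :: "real \<Rightarrow> real"
  shows "Ck1 k S f \<Longrightarrow> Ck1 k S g \<Longrightarrow> Ck1 k S (\<lambda>x. (f x, g x))"
proof (induction k arbitrary: f g)
  case 0 then show ?case by (simp add: continuous_on_Pair)
next
  case (Suc k)
  then obtain f' g' where "\<forall>x\<in>S. (f has_vector_derivative f' x) (at x)" "Ck1 k S f'"
    "\<forall>x\<in>S. (g has_vector_derivative g' x) (at x)" "Ck1 k S g'" by auto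
  then show ?case using Suc.IH
    by (auto intro!: exI[of _ "\<lambda>x. (f' x, g' x)"] has_vector_derivative_Pair)
qed

lemma Ck1_fst:
  fixes c :: "real \<Rightarrow> 'a::real_normed_vector \<times> 'b::real_normed_vector"
  shows "Ck1 k S c \<Longrightarrow> Ck1 k S (\<lambda>x. fst (c x))"
proof (induction k arbitrary: c)
  case 0 then show ?case by (simp add: continuous_on_fst)
next
  case (Suc k)
  then obtain c' where d: "\<forall>x\<in>S. (c has_vector_derivative c' x) (at x)" "Ck1 k S c'" by auto
  have "\<forall>x\<in>S. ((\<lambda>x. fst (c x)) has_vector_derivative fst (c' x)) (at x)"
    using d(1) unfolding has_vector_derivative_def
    by (auto intro!: derivative_eq_intros)
  then show ?case using Suc.IH d(2) by auto
qed

lemma Ck1_snd: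
  fixes c :: "real \<Rightarrow> 'a::real_normed_vector \<times> 'b::real_normed_vector"
  shows "Ck1 k S c \<Longrightarrow> Ck1 k S (\<lambda>x. snd (c x))"
proof (induction k arbitrary: c)
  case 0 then show ?case by (simp add: continuous_on_snd)
next
  case (Suc k)
  then obtain c' where d: "\<forall>x\<in>S. (c has_vector_derivative c' x) (at x)" "Ck1 k S c'" by auto
  have "\<forall>x\<in>S. ((\<lambda>x. snd (c x)) has_vector_derivative snd (c' x)) (at x)"
    using d(1) unfolding has_vector_derivative_def
    by (auto intro!: derivative_eq_intros)
  then show ?case using Suc.IH d(2) by auto
qed

lemma Ck1_comp:
  fixes f :: "real \<Rightarrow> 'b::real_normed_vector" and g :: "real \<Rightarrow> real"
  shows "Ck1 k T f \<Longrightarrow> Ck1 k S g \<Longrightarrow> g ` S \<subseteq> T \<Longrightarrow> Ck1 k S (\<lambda>x. f (g x))"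
proof (induction k arbitrary: f g)
  case 0 then show ?case using continuous_on_compose2 by (metis Ck1.simps(1))
next
  case (Suc k)
  then obtain f' g' where fd: "\<forall>x\<in>T. (f has_vector_derivative f' x) (at x)" and f'c: "Ck1 k T f'"
    and gd: "\<forall>x\<in>S. (g has_vector_derivative g' x) (at x)" and g'c: "Ck1 k S g'" by auto
  have gc: "Ck1 k S g" using Suc.prems Ck1_Suc_imp by blast
  have "\<forall>x\<in>S. ((\<lambda>x. f (g x)) has_vector_derivative (g' x *\<^sub>R f' (g x))) (at x)"
    using fd gd Suc.prems(3) vector_diff_chain_at[of g _ _ f] by (auto simp: o_def)
  moreover have "Ck1 k S (\<lambda>x. g' x *\<^sub>R f' (g x))"
    using Suc.IH[OF f'c gc Suc.prems(3)] g'c by (intro Ck1_scaleR)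
  ultimately show ?case by auto
qed

lemma Ck1_inverse_base: "Ck1 k (-{0}) (\<lambda>y::real. inverse y)"
proof (induction k)
  case 0 then show ?case by (simp add: continuous_on_inverse continuous_on_id)
next
  case (Suc k)
  have "\<forall>x\<in>-{0}. ((\<lambda>y::real. inverse y) has_vector_derivative (- (inverse x * inverse x))) (at x)"
    by (auto intro!: derivative_eq_intros simp: has_real_derivative_iff_has_vector_derivative[symmetric]
        power2_eq_square)
  moreover have "Ck1 k (-{0}) (\<lambda>x::real. - (inverse x * inverse x))"
    using Suc by (intro Ck1_uminus Ck1_mult)
  ultimately show ?case by auto
qed

lemma Ck1_inverse:
  fixes f :: "real \<Rightarrow> real"
  shows "Ck1 k S f \<Longrightarrow> (\<And>x. x \<in> S \<Longrightarrow> f x \<noteq> 0) \<Longrightarrow> Ck1 k S (\<lambda>x. inverse (f x))"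
proof -
  assume a: "Ck1 k S f" "\<And>x. x \<in> S \<Longrightarrow> f x \<noteq> 0"
  then have "f ` S \<subseteq> -{0}" by auto
  then show ?thesis using Ck1_comp[OF Ck1_inverse_base a(1)] by blast
qed

definition smooth1 :: "real set \<Rightarrow> (real \<Rightarrow> 'b::real_normed_vector) \<Rightarrow> bool" where
  "smooth1 S f \<longleftrightarrow> (\<forall>k. Ck1 k S f)"

lemma Ck_on_Ck1:
  fixes f :: "real \<Rightarrow> 'b::real_normed_vector"
  assumes "open S"
  shows "Ck_on k S f \<longleftrightarrow> Ck1 k S f"
proof (induction k arbitrary: f)
  case 0 then show ?case by simp
next
  case (Suc k)
  show ?case
  proof
    assume A: "Ck_on (Suc k) S f"
    then have dif: "\<forall>x\<in>S. f differentiable (at x)" and C: "Ck_on k S (\<lambda>x. frechet_derivative f (at x) 1)"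
      by auto
    have "\<forall>x\<in>S. (f has_vector_derivative frechet_derivative f (at x) 1) (at x)"
    proof
      fix x assume "x \<in> S"
      then have fd: "(f has_derivative frechet_derivative f (at x)) (at x)"
        using dif frechet_derivative_works by blast
      have lin: "linear (frechet_derivative f (at x))"
        using dif \<open>x \<in> S\<close> linear_frechet_derivative by blast
      have "frechet_derivative f (at x) = (\<lambda>h. h *\<^sub>R frechet_derivative f (at x) 1)"
      proof
        fix h :: real
        show "frechet_derivative f (at x) h = h *\<^sub>R frechet_derivative f (at x) 1"
          using linear_scale[OF lin, of h 1] by simp
      qed
      then show "(f has_vector_derivative frechet_derivative f (at x) 1) (at x)"
        using fd unfolding has_vector_derivative_def by metis
    qed
    then show "Ck1 (Suc k) S f" using C Suc.IH by auto
  next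
    assume "Ck1 (Suc k) S f"
    then obtain f' where d: "\<forall>x\<in>S. (f has_vector_derivative f' x) (at x)" and c: "Ck1 k S f'" by auto
    have dif: "\<forall>x\<in>S. f differentiable (at x)" using d differentiableI_vector by blast
    have "Ck_on k S (\<lambda>x. frechet_derivative f (at x) v)" for v
    proof -
      have "\<forall>x\<in>S. frechet_derivative f (at x) v = v *\<^sub>R f' x"
        using d frechet_derivative_at unfolding has_vector_derivative_def by metis
      then have "Ck1 k S (\<lambda>x. frechet_derivative f (at x) v)"
        using Ck1_cong[OF assms _ Ck1_cscale[OF c, of v]] by metis
      then show ?thesis using Suc.IH by simp
    qed
    then show "Ck_on (Suc k) S f" using dif by simp
  qed
qed

lemma smooth_on_smooth1:
  fixes f :: "real \<Rightarrow> 'b::real_normed_vector"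
  assumes "open S" shows "smooth_on S f \<longleftrightarrow> smooth1 S f"
  unfolding smooth_on_def smooth1_def using Ck_on_Ck1[OF assms, where 'b='b] by blast

lemma Ck1_Suc_vd:
  assumes "open S" "Ck1 (Suc k) S f"
  shows "(\<forall>x\<in>S. (f has_vector_derivative vector_derivative f (at x)) (at x)) \<and>
         Ck1 k S (\<lambda>x. vector_derivative f (at x))"
proof -
  obtain f' where d: "\<forall>x\<in>S. (f has_vector_derivative f' x) (at x)" and c: "Ck1 k S f'"
    using assms(2) by auto
  have e: "\<forall>x\<in>S. vector_derivative f (at x) = f' x" using d vector_derivative_at by blast
  show ?thesis using d e Ck1_cong[OF assms(1) _ c, of "\<lambda>x. vector_derivative f (at x)"] by auto
qed

lemma smooth1_vd:
  assumes "open S" "smooth1 S f"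
  shows "(\<forall>x\<in>S. (f has_vector_derivative vector_derivative f (at x)) (at x)) \<and>
         smooth1 S (\<lambda>x. vector_derivative f (at x))"
  using Ck1_Suc_vd[OF assms(1)] assms(2) unfolding smooth1_def by blast

lemma smooth1_nth:
  assumes "open S" "smooth1 S f"
  shows "smooth1 S (nth_deriv j f) \<and>
     (\<forall>x\<in>S. (nth_deriv j f has_vector_derivative nth_deriv (Suc j) f x) (at x))"
proof (induction j)
  case 0 then show ?case using smooth1_vd[OF assms] assms by auto
next
  case (Suc j)
  then show ?case using smooth1_vd[OF assms(1), of "nth_deriv j f"]
      smooth1_vd[OF assms(1), of "nth_deriv (Suc j) f"] by simp
qed

lemma nth_deriv_Suc': "nth_deriv (Suc k) f = nth_deriv k (nth_deriv 1 f)"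
  by (induction k) auto

lemma smooth1_subset: "T \<subseteq> S \<Longrightarrow> smooth1 S f \<Longrightarrow> smooth1 T f"
  unfolding smooth1_def using Ck1_subset by blast

declare nth_deriv.simps(2)[simp del]

definition O0 :: "nat \<Rightarrow> (real \<Rightarrow> 'b::real_normed_vector) \<Rightarrow> bool" where
  "O0 m f \<longleftrightarrow> (\<exists>C \<delta>. 0 < \<delta> \<and> (\<forall>s. \<bar>s\<bar> < \<delta> \<longrightarrow> norm (f s) \<le> C * \<bar>s\<bar> ^ m))"

lemma O0I: "0 < \<delta> \<Longrightarrow> (\<And>s. \<bar>s\<bar> < \<delta> \<Longrightarrow> norm (f s) \<le> C * \<bar>s\<bar> ^ m) \<Longrightarrow> O0 m f"
  unfolding O0_def by blast

lemma O0E: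
  assumes "O0 m f"
  obtains C \<delta> where "0 < \<delta>" "0 \<le> C" "\<And>s. \<bar>s\<bar> < \<delta> \<Longrightarrow> norm (f s) \<le> C * \<bar>s\<bar> ^ m"
proof -
  obtain C \<delta> where d: "0 < \<delta>" "\<And>s. \<bar>s\<bar> < \<delta> \<Longrightarrow> norm (f s) \<le> C * \<bar>s\<bar> ^ m"
    using assms unfolding O0_def by blast
  have "norm (f s) \<le> max C 0 * \<bar>s\<bar> ^ m" if "\<bar>s\<bar> < \<delta>" for s
  proof -
    have "C * \<bar>s\<bar> ^ m \<le> max C 0 * \<bar>s\<bar> ^ m" by (intro mult_right_mono) auto
    then show ?thesis using d(2)[OF that] by linarith
  qed
  then show ?thesis using that[of \<delta> "max C 0"] d(1) by auto
qed

lemma O0_add: "O0 m f \<Longrightarrow> O0 m g \<Longrightarrow> O0 m (\<lambda>s. f s + g s)"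
proof -
  assume "O0 m f" "O0 m g"
  then obtain C1 d1 C2 d2 where a: "0 < d1" "\<And>s. \<bar>s\<bar> < d1 \<Longrightarrow> norm (f s) \<le> C1 * \<bar>s\<bar> ^ m"
    and b: "0 < d2" "\<And>s. \<bar>s\<bar> < d2 \<Longrightarrow> norm (g s) \<le> C2 * \<bar>s\<bar> ^ m" by (metis O0E)
  show ?thesis
  proof (rule O0I[of "min d1 d2" _ "C1 + C2"])
    fix s assume "\<bar>s\<bar> < min d1 d2"
    then show "norm (f s + g s) \<le> (C1 + C2) * \<bar>s\<bar> ^ m"
      using a(2)[of s] b(2)[of s] norm_triangle_ineq[of "f s" "g s"] by (simp add: distrib_right)
  qed (use a b in auto)
qed

lemma O0_cscale: "O0 m f \<Longrightarrow> O0 m (\<lambda>s. c *\<^sub>R f s)"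
proof -
  assume "O0 m f"
  then obtain C d where a: "0 < d" "0 \<le> C" "\<And>s. \<bar>s\<bar> < d \<Longrightarrow> norm (f s) \<le> C * \<bar>s\<bar> ^ m" by (metis O0E)
  show ?thesis
  proof (rule O0I[of d _ "\<bar>c\<bar> * C"])
    fix s assume "\<bar>s\<bar> < d"
    then show "norm (c *\<^sub>R f s) \<le> (\<bar>c\<bar> * C) * \<bar>s\<bar> ^ m"
      using a(3)[of s] by (simp add: mult.assoc mult_left_mono)
  qed (use a in auto)
qed

lemma O0_uminus: "O0 m f \<Longrightarrow> O0 m (\<lambda>s. - f s)"
  using O0_cscale[of m f "-1"] by simp

lemma O0_diff: "O0 m f \<Longrightarrow> O0 m g \<Longrightarrow> O0 m (\<lambda>s. f s - g s)"
  using O0_add[of m f "\<lambda>s. - g s"] O0_uminus by fastforce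

lemma O0_scaleR:
  fixes f :: "real \<Rightarrow> real"
  shows "O0 a f \<Longrightarrow> O0 b g \<Longrightarrow> O0 (a + b) (\<lambda>s. f s *\<^sub>R g s)"
proof -
  assume "O0 a f" "O0 b g"
  then obtain C1 d1 C2 d2 where x: "0 < d1" "0 \<le> C1" "\<And>s. \<bar>s\<bar> < d1 \<Longrightarrow> norm (f s) \<le> C1 * \<bar>s\<bar> ^ a"
    and y: "0 < d2" "0 \<le> C2" "\<And>s. \<bar>s\<bar> < d2 \<Longrightarrow> norm (g s) \<le> C2 * \<bar>s\<bar> ^ b" by (metis O0E)
  show ?thesis
  proof (rule O0I[of "min d1 d2" _ "C1 * C2"])
    fix s assume "\<bar>s\<bar> < min d1 d2"
    then have "\<bar>f s\<bar> * norm (g s) \<le> (C1 * \<bar>s\<bar> ^ a) * (C2 * \<bar>s\<bar> ^ b)"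
      using x(3)[of s] y(3)[of s] y(2) by (intro mult_mono) auto
    then show "norm (f s *\<^sub>R g s) \<le> (C1 * C2) * \<bar>s\<bar> ^ (a + b)"
      by (simp add: power_add mult_ac)
  qed (use x y in auto)
qed

lemma O0_mult:
  fixes f g :: "real \<Rightarrow> real"
  shows "O0 a f \<Longrightarrow> O0 b g \<Longrightarrow> O0 (a + b) (\<lambda>s. f s * g s)"
  using O0_scaleR[of a f b g] by simp

lemma O0_mono: "m \<le> k \<Longrightarrow> O0 k f \<Longrightarrow> O0 m f"
proof -
  assume mk: "m \<le> k" "O0 k f"
  then obtain C d where a: "0 < d" "0 \<le> C" "\<And>s. \<bar>s\<bar> < d \<Longrightarrow> norm (f s) \<le> C * \<bar>s\<bar> ^ k" by (metis O0E)
  show ?thesis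
  proof (rule O0I[of "min d 1" _ C])
    fix s assume s: "\<bar>s\<bar> < min d 1"
    have "\<bar>s\<bar> ^ k \<le> \<bar>s\<bar> ^ m" using s mk(1) by (intro power_decreasing) auto
    then show "norm (f s) \<le> C * \<bar>s\<bar> ^ m" using a(3)[of s] s a(2)
      by (meson min_less_iff_conj mult_left_mono order_trans)
  qed (use a in auto)
qed

lemma O0_zero: "O0 m (\<lambda>s. 0)"
  by (rule O0I[of 1 _ 0]) auto

lemma O0_monom: "m \<le> j \<Longrightarrow> O0 m (\<lambda>s. s ^ j *\<^sub>R a)"
proof -
  assume "m \<le> j"
  have "O0 j (\<lambda>s. s ^ j *\<^sub>R a)"
    by (rule O0I[of 1 _ "norm a"]) (auto simp: power_abs mult.commute)
  then show ?thesis using O0_mono \<open>m \<le> j\<close> by blast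
qed

lemma O0_monom_real: "m \<le> j \<Longrightarrow> O0 m (\<lambda>s::real. c * s ^ j)"
  using O0_monom[of m j c] by (simp add: mult.commute)

lemma O0_cong: "0 < \<delta> \<Longrightarrow> (\<And>s. \<bar>s\<bar> < \<delta> \<Longrightarrow> f s = g s) \<Longrightarrow> O0 m f \<Longrightarrow> O0 m g"
proof -
  assume d: "0 < \<delta>" "\<And>s. \<bar>s\<bar> < \<delta> \<Longrightarrow> f s = g s" "O0 m f"
  then obtain C e where a: "0 < e" "\<And>s. \<bar>s\<bar> < e \<Longrightarrow> norm (f s) \<le> C * \<bar>s\<bar> ^ m" by (metis O0E)
  show ?thesis by (rule O0I[of "min e \<delta>" _ C]) (use a d in \<open>auto simp: d(2)[symmetric]\<close>)
qed

lemma O0_comp: "O0 m f \<Longrightarrow> O0 1 \<phi> \<Longrightarrow> O0 m (\<lambda>s. f (\<phi> s))"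
proof -
  assume "O0 m f" "O0 1 \<phi>"
  then obtain C d K e where a: "0 < d" "0 \<le> C" "\<And>s. \<bar>s\<bar> < d \<Longrightarrow> norm (f s) \<le> C * \<bar>s\<bar> ^ m"
    and b: "0 < e" "0 \<le> K" "\<And>s. \<bar>s\<bar> < e \<Longrightarrow> norm (\<phi> s) \<le> K * \<bar>s\<bar> ^ 1" by (metis O0E)
  show ?thesis
  proof (rule O0I[of "min e (d / (K + 1))" _ "C * K ^ m"])
    fix s assume s: "\<bar>s\<bar> < min e (d / (K + 1))"
    have p: "\<bar>\<phi> s\<bar> \<le> K * \<bar>s\<bar>" using b(3)[of s] s by simp
    have "(K + 1) * \<bar>s\<bar> < d" using s b(2) by (simp add: field_simps)
    moreover have "K * \<bar>s\<bar> \<le> (K + 1) * \<bar>s\<bar>" by (intro mult_right_mono) auto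
    ultimately have "\<bar>\<phi> s\<bar> < d" using p by linarith
    then have "norm (f (\<phi> s)) \<le> C * \<bar>\<phi> s\<bar> ^ m" using a(3) by blast
    also have "\<dots> \<le> C * (K * \<bar>s\<bar>) ^ m" using p a(2) by (intro mult_left_mono power_mono) auto
    finally show "norm (f (\<phi> s)) \<le> (C * K ^ m) * \<bar>s\<bar> ^ m" by (simp add: power_mult_distrib mult_ac)
  qed (use a b in auto)
qed

lemma O0_fst: "O0 m f \<Longrightarrow> O0 m (\<lambda>s. fst (f s))"
proof -
  assume "O0 m f"
  then obtain C d where a: "0 < d" "\<And>s. \<bar>s\<bar> < d \<Longrightarrow> norm (f s) \<le> C * \<bar>s\<bar> ^ m" by (metis O0E)
  show ?thesis
  proof (rule O0I[of d _ C])
    fix s assume "\<bar>s\<bar> < d"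
    moreover have "norm (fst (f s)) \<le> norm (f s)" using norm_fst_le[of "fst (f s)" "snd (f s)"] by simp
    ultimately show "norm (fst (f s)) \<le> C * \<bar>s\<bar> ^ m" using a(2)[of s] by linarith
  qed (use a in auto)
qed

lemma O0_snd: "O0 m f \<Longrightarrow> O0 m (\<lambda>s. snd (f s))"
proof -
  assume "O0 m f"
  then obtain C d where a: "0 < d" "\<And>s. \<bar>s\<bar> < d \<Longrightarrow> norm (f s) \<le> C * \<bar>s\<bar> ^ m" by (metis O0E)
  show ?thesis
  proof (rule O0I[of d _ C])
    fix s assume "\<bar>s\<bar> < d"
    moreover have "norm (snd (f s)) \<le> norm (f s)" using norm_snd_le[of "snd (f s)" "fst (f s)"] by simp
    ultimately show "norm (snd (f s)) \<le> C * \<bar>s\<bar> ^ m" using a(2)[of s] by linarith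
  qed (use a in auto)
qed

lemma norm_Pair_le':
  fixes a :: "'a::real_normed_vector" and b :: "'b::real_normed_vector"
  shows "norm (a, b) \<le> norm a + norm b"
  unfolding norm_Pair by (rule sqrt_sum_squares_le_sum) auto

lemma O0_Pair: "O0 m f \<Longrightarrow> O0 m g \<Longrightarrow> O0 m (\<lambda>s. (f s, g s))"
proof -
  assume "O0 m f" "O0 m g"
  then obtain C1 d1 C2 d2 where a: "0 < d1" "\<And>s. \<bar>s\<bar> < d1 \<Longrightarrow> norm (f s) \<le> C1 * \<bar>s\<bar> ^ m"
    and b: "0 < d2" "\<And>s. \<bar>s\<bar> < d2 \<Longrightarrow> norm (g s) \<le> C2 * \<bar>s\<bar> ^ m" by (metis O0E)
  show ?thesis
  proof (rule O0I[of "min d1 d2" _ "C1 + C2"])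
    fix s assume "\<bar>s\<bar> < min d1 d2"
    then show "norm (f s, g s) \<le> (C1 + C2) * \<bar>s\<bar> ^ m"
      using a(2)[of s] b(2)[of s] norm_Pair_le'[of "f s" "g s"] by (simp add: distrib_right)
  qed (use a b in auto)
qed

lemma O0_Pair_iff: "O0 m f \<longleftrightarrow> O0 m (\<lambda>s. fst (f s)) \<and> O0 m (\<lambda>s. snd (f s))"
  using O0_fst O0_snd O0_Pair[of m "\<lambda>s. fst (f s)" "\<lambda>s. snd (f s)"] by auto

lemma O0_cont0: "isCont f 0 \<Longrightarrow> O0 0 f"
proof -
  assume "isCont f 0"
  then obtain d where d: "0 < d" "\<And>s. dist s 0 < d \<Longrightarrow> dist (f s) (f 0) < 1"
    unfolding continuous_at_eps_delta by (meson zero_less_one)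
  show ?thesis
  proof (rule O0I[of d _ "norm (f 0) + 1"])
    fix s assume "\<bar>s\<bar> < d"
    then have "norm (f s - f 0) < 1" using d(2)[of s] by (simp add: dist_norm)
    then show "norm (f s) \<le> (norm (f 0) + 1) * \<bar>s\<bar> ^ 0"
      using norm_triangle_ineq2[of "f s" "f 0"] by simp
  qed (use d in auto)
qed

lemma O0_at0: "O0 (Suc m) f \<Longrightarrow> f 0 = 0"
proof -
  assume "O0 (Suc m) f"
  then obtain C d where "0 < d" "\<And>s. \<bar>s\<bar> < d \<Longrightarrow> norm (f s) \<le> C * \<bar>s\<bar> ^ Suc m" by (metis O0E)
  then have "norm (f 0) \<le> 0" by (metis abs_zero mult_zero_right power_0_Suc mult_zero_left)
  then show ?thesis by simp
qed

section \<open>Uniqueness of expansions\<close>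

lemma O0_poly_zero:
  fixes a :: "nat \<Rightarrow> 'b::real_normed_vector"
  assumes O: "O0 (Suc m) (\<lambda>t. \<Sum>k\<le>m. t ^ k *\<^sub>R a k)"
  shows "k \<le> m \<Longrightarrow> a k = 0"
proof (induction k rule: less_induct)
  case (less k)
  then have z: "\<And>j. j < k \<Longrightarrow> a j = 0" by simp
  define P where "P t = (\<Sum>j\<in>{k..m}. t ^ (j - k) *\<^sub>R a j)" for t :: real
  have split: "{..m} = {..<k} \<union> {k..m}" using less.prems by auto
  have eq: "(\<Sum>j\<le>m. t ^ j *\<^sub>R a j) = t ^ k *\<^sub>R P t" for t
  proof -
    have "(\<Sum>j\<le>m. t ^ j *\<^sub>R a j) = (\<Sum>j\<in>{k..m}. t ^ j *\<^sub>R a j)"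
      unfolding split by (subst sum.union_disjoint) (auto simp: z)
    also have "\<dots> = (\<Sum>j\<in>{k..m}. t ^ k *\<^sub>R (t ^ (j - k) *\<^sub>R a j))"
      by (rule sum.cong) (auto simp: power_add[symmetric])
    finally show ?thesis by (simp add: P_def scaleR_sum_right)
  qed
  have P0: "P 0 = a k"
  proof -
    have "{k..m} = insert k {Suc k..m}" using less.prems by auto
    then show ?thesis by (simp add: P_def power_0_left)
  qed
  have contP: "isCont P 0" unfolding P_def by (intro continuous_intros)
  then have t1: "(P \<longlongrightarrow> a k) (at 0)" using P0 isCont_def by metis
  from O obtain C d where Cd: "0 < d" "\<And>s. \<bar>s\<bar> < d \<Longrightarrow> norm (\<Sum>j\<le>m. s ^ j *\<^sub>R a j) \<le> C * \<bar>s\<bar> ^ Suc m"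
    unfolding O0_def by blast
  have ev: "\<forall>\<^sub>F t in at 0. norm (P t) \<le> C * \<bar>t\<bar> ^ (Suc m - k)"
  proof -
    have "norm (P t) \<le> C * \<bar>t\<bar> ^ (Suc m - k)" if "t \<noteq> 0" "\<bar>t\<bar> < d" for t
    proof -
      have "\<bar>t\<bar> ^ k * norm (P t) \<le> C * \<bar>t\<bar> ^ Suc m" using Cd(2)[OF that(2)] eq[of t] by (simp add: power_abs)
      also have "\<dots> = \<bar>t\<bar> ^ k * (C * \<bar>t\<bar> ^ (Suc m - k))"
        using less.prems by (simp add: power_add[symmetric] mult_ac)
      finally show ?thesis using that(1) by (simp add: mult_le_cancel_left_pos)
    qed
    then show ?thesis unfolding eventually_at using Cd(1) by (auto simp: dist_norm)
  qed
  have lim0: "((\<lambda>t. C * \<bar>t\<bar> ^ (Suc m - k)) \<longlongrightarrow> 0) (at (0::real))"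
  proof -
    have "isCont (\<lambda>t::real. C * \<bar>t\<bar> ^ (Suc m - k)) 0" by (intro continuous_intros)
    moreover have "Suc m - k > 0" using less.prems by simp
    ultimately show ?thesis unfolding isCont_def by (simp add: power_0_left)
  qed
  have "(P \<longlongrightarrow> 0) (at 0)" by (rule Lim_null_comparison[OF ev lim0])
  then show ?case using t1 tendsto_unique[OF at_neq_bot] by metis
qed

section \<open>Taylor\<close>

lemma antideriv_O:
  fixes g :: "real \<Rightarrow> 'b::real_normed_vector"
  assumes "open S" "0 \<in> S" "\<And>x. x \<in> S \<Longrightarrow> (g has_vector_derivative g' x) (at x)" "O0 m g'"
  shows "O0 (Suc m) (\<lambda>t. g t - g 0)"
proof -
  obtain C d where Cd: "0 < d" "0 \<le> C" "\<And>s. \<bar>s\<bar> < d \<Longrightarrow> norm (g' s) \<le> C * \<bar>s\<bar> ^ m"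
    using assms(4) by (metis O0E)
  obtain e where e: "0 < e" "ball 0 e \<subseteq> S" using assms(1,2) open_contains_ball by blast
  show ?thesis
  proof (rule O0I[of "min d e" _ C])
    fix t :: real assume t: "\<bar>t\<bar> < min d e"
    let ?K = "{-\<bar>t\<bar>..\<bar>t\<bar>}"
    have inS: "x \<in> S" if "x \<in> ?K" for x using that t e(2) by (auto simp: dist_norm)
    have der: "(g has_derivative (\<lambda>h. h *\<^sub>R g' x)) (at x within ?K)" if "x \<in> ?K" for x
      using assms(3)[OF inS[OF that]] unfolding has_vector_derivative_def
      by (rule has_derivative_at_withinI)
    have bd: "onorm (\<lambda>h. h *\<^sub>R g' x) \<le> C * \<bar>t\<bar> ^ m" if "x \<in> ?K" for x
    proof (rule onorm_le)
      fix h :: real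
      have "\<bar>x\<bar> < d" using that t by auto
      then have "norm (g' x) \<le> C * \<bar>x\<bar> ^ m" using Cd(3) by blast
      also have "\<dots> \<le> C * \<bar>t\<bar> ^ m" using that Cd(2) by (intro mult_left_mono power_mono) auto
      finally show "norm (h *\<^sub>R g' x) \<le> C * \<bar>t\<bar> ^ m * norm h"
        by (simp add: mult_left_mono mult.commute)
    qed
    have "norm (g t - g 0) \<le> C * \<bar>t\<bar> ^ m * norm (t - 0)"
      by (rule differentiable_bound[OF convex_real_interval(5) der bd]) auto
    then show "norm (g t - g 0) \<le> C * \<bar>t\<bar> ^ Suc m" by (simp add: mult_ac)
  qed (use Cd e in auto)
qed

lemma poly_vd:
  "((\<lambda>t. \<Sum>k\<le>Suc m. (t ^ k / fact k) *\<^sub>R c k) has_vector_derivative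
      (\<Sum>k\<le>m. (t ^ k / fact k) *\<^sub>R c (Suc k))) (at t)"
proof (induction m)
  case 0
  show ?case by (auto intro!: derivative_eq_intros)
next
  case (Suc m)
  have d: "((\<lambda>t. (t ^ Suc (Suc m) / fact (Suc (Suc m))) *\<^sub>R c (Suc (Suc m))) has_vector_derivative
        (t ^ Suc m / fact (Suc m)) *\<^sub>R c (Suc (Suc m))) (at t)"
  proof -
    have r0: "((\<lambda>t. t ^ Suc (Suc m)) has_real_derivative real (Suc (Suc m)) * t ^ Suc m) (at t)"
      using DERIV_pow[of "Suc (Suc m)" t] by simp
    have e: "real (Suc (Suc m)) * t ^ Suc m / fact (Suc (Suc m)) = t ^ Suc m / fact (Suc m)"
    proof -
      have "real (Suc (Suc m)) * t ^ Suc m / fact (Suc (Suc m)) =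
          real (Suc (Suc m)) * t ^ Suc m / (real (Suc (Suc m)) * fact (Suc m))"
        by (simp only: fact_Suc[of "Suc m"])
      also have "\<dots> = t ^ Suc m / fact (Suc m)"
        by (rule nonzero_mult_divide_mult_cancel_left) simp
      finally show ?thesis .
    qed
    have r: "((\<lambda>t. t ^ Suc (Suc m) / fact (Suc (Suc m))) has_real_derivative t ^ Suc m / fact (Suc m)) (at t)"
      using DERIV_cdivide[OF r0, of "fact (Suc (Suc m))"] e by simp
    show ?thesis using has_vector_derivative_scaleR[OF r has_vector_derivative_const[of "c (Suc (Suc m))"]]
      by simp
  qed
  show ?case
    unfolding sum.atMost_Suc[of _ "Suc m"] sum.atMost_Suc[of _ m]
    using has_vector_derivative_add[OF Suc d] by (simp add: sum.atMost_Suc)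
qed

definition dfam :: "real set \<Rightarrow> (nat \<Rightarrow> real \<Rightarrow> 'b::real_normed_vector) \<Rightarrow> bool" where
  "dfam S D \<longleftrightarrow> (\<forall>j. \<forall>x\<in>S. (D j has_vector_derivative D (Suc j) x) (at x))"

lemma taylor_O:
  fixes D :: "nat \<Rightarrow> real \<Rightarrow> 'b::real_normed_vector"
  assumes "open S" "0 \<in> S" "dfam S D"
  shows "O0 (Suc m) (\<lambda>t. D 0 t - (\<Sum>k\<le>m. (t ^ k / fact k) *\<^sub>R D k 0))"
  using assms(3)
proof (induction m arbitrary: D)
  case 0
  have "isCont (D 1) 0" using 0 assms(2) unfolding dfam_def
    by (metis has_vector_derivative_continuous)
  then have "O0 0 (D 1)" by (rule O0_cont0)
  then have "O0 (Suc 0) (\<lambda>t. D 0 t - D 0 0)"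
    using antideriv_O[OF assms(1,2), of "D 0" "D 1"] 0 unfolding dfam_def by simp
  then show ?case by simp
next
  case (Suc m)
  have "dfam S (\<lambda>j. D (Suc j))" using Suc.prems unfolding dfam_def by simp
  then have IH: "O0 (Suc m) (\<lambda>t. D 1 t - (\<Sum>k\<le>m. (t ^ k / fact k) *\<^sub>R D (Suc k) 0))"
    using Suc.IH by simp
  let ?g = "\<lambda>t. D 0 t - (\<Sum>k\<le>Suc m. (t ^ k / fact k) *\<^sub>R D k 0)"
  have gd: "(?g has_vector_derivative (D 1 t - (\<Sum>k\<le>m. (t ^ k / fact k) *\<^sub>R D (Suc k) 0))) (at t)"
    if "t \<in> S" for t
    using Suc.prems that poly_vd[where m=m and c="\<lambda>k. D k 0" and t=t] unfolding dfam_def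
    by (auto intro!: has_vector_derivative_diff)
  have g0: "?g 0 = 0"
    by (simp add: sum.atMost_shift zero_power)
  have "O0 (Suc (Suc m)) (\<lambda>t. ?g t - ?g 0)"
    by (rule antideriv_O[OF assms(1,2) gd IH])
  then show ?case using g0 by simp
qed

lemma dfam_nth: assumes "open S" "smooth1 S f" shows "dfam S (\<lambda>j. nth_deriv j f)"
  unfolding dfam_def using smooth1_nth[OF assms] by auto

lemma taylor_smooth:
  fixes f :: "real \<Rightarrow> 'b::real_normed_vector"
  assumes "open S" "0 \<in> S" "smooth1 S f"
  shows "O0 (Suc m) (\<lambda>t. f t - (\<Sum>k\<le>m. (t ^ k / fact k) *\<^sub>R nth_deriv k f 0))"
  using taylor_O[OF assms(1,2) dfam_nth[OF assms(1,3)], of m] by simp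

lemma coeff_smooth:
  fixes f :: "real \<Rightarrow> 'b::real_normed_vector"
  assumes "open S" "0 \<in> S" "smooth1 S f"
    and O: "O0 (Suc m) (\<lambda>t. f t - (\<Sum>k\<le>m. t ^ k *\<^sub>R c k))"
    and "k \<le> m"
  shows "nth_deriv k f 0 = fact k *\<^sub>R c k"
proof -
  have "O0 (Suc m) (\<lambda>t. (f t - (\<Sum>k\<le>m. t ^ k *\<^sub>R c k)) -
          (f t - (\<Sum>k\<le>m. (t ^ k / fact k) *\<^sub>R nth_deriv k f 0)))"
    by (rule O0_diff[OF O taylor_smooth[OF assms(1-3)]])
  moreover have "(f t - (\<Sum>k\<le>m. t ^ k *\<^sub>R c k)) -
          (f t - (\<Sum>k\<le>m. (t ^ k / fact k) *\<^sub>R nth_deriv k f 0)) =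
        (\<Sum>k\<le>m. t ^ k *\<^sub>R ((1 / fact k) *\<^sub>R nth_deriv k f 0 - c k))" for t
    by (simp add: sum_subtractf scaleR_diff_right)
  ultimately have "O0 (Suc m) (\<lambda>t. \<Sum>k\<le>m. t ^ k *\<^sub>R ((1 / fact k) *\<^sub>R nth_deriv k f 0 - c k))"
    by simp
  from O0_poly_zero[OF this assms(5)] have "(1 / fact k) *\<^sub>R nth_deriv k f 0 = c k"
    by simp
  then have "fact k *\<^sub>R ((1 / fact k) *\<^sub>R nth_deriv k f 0) = fact k *\<^sub>R c k" by (rule arg_cong)
  then show ?thesis by simp
qed

lemma jets_zero:
  fixes f :: "real \<Rightarrow> 'b::real_normed_vector"
  assumes "open S" "0 \<in> S" "smooth1 S f" "O0 m f" "k < m"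
  shows "nth_deriv k f 0 = 0"
proof -
  obtain m' where m: "m = Suc m'" using assms(5) by (cases m) auto
  have "O0 (Suc m') (\<lambda>t. f t - (\<Sum>k\<le>m'. t ^ k *\<^sub>R (0::'b)))" using assms(4) m by simp
  from coeff_smooth[OF assms(1-3) this, of k] show ?thesis using assms(5) m by simp
qed

lemma jets_O:
  fixes f :: "real \<Rightarrow> 'b::real_normed_vector"
  assumes "open S" "0 \<in> S" "smooth1 S f" "\<And>k. k < m \<Longrightarrow> nth_deriv k f 0 = 0"
  shows "O0 m f"
proof (cases m)
  case 0
  have "O0 (Suc 0) (\<lambda>t. f t - f 0)" using taylor_smooth[OF assms(1-3), of 0] by simp
  then have a: "O0 0 (\<lambda>t. f t - f 0)" using O0_mono[of 0 "Suc 0"] by simp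
  have b: "O0 0 (\<lambda>t. f 0)" by (rule O0_cont0) simp
  have "O0 0 (\<lambda>t. (f t - f 0) + f 0)" by (rule O0_add[OF a b])
  then show ?thesis using 0 by simp
next
  case (Suc m')
  have "(\<Sum>k\<le>m'. (t ^ k / fact k) *\<^sub>R nth_deriv k f 0) = 0" for t
    using assms(4) Suc by (intro sum.neutral) auto
  then show ?thesis using taylor_smooth[OF assms(1-3), of m'] Suc by simp
qed

lemma next_coeff:
  fixes f :: "real \<Rightarrow> 'b::real_normed_vector"
  assumes "open S" "0 \<in> S" "smooth1 S f" "O0 m f"
  shows "\<exists>a. O0 (Suc m) (\<lambda>t. f t - t ^ m *\<^sub>R a)"
proof -
  have z: "nth_deriv k f 0 = 0" if "k < m" for k using jets_zero[OF assms that] .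
  have "(\<Sum>k\<le>m. (t ^ k / fact k) *\<^sub>R nth_deriv k f 0) = t ^ m *\<^sub>R ((1 / fact m) *\<^sub>R nth_deriv m f 0)" for t
  proof -
    have "(\<Sum>k\<le>m. (t ^ k / fact k) *\<^sub>R nth_deriv k f 0) = (\<Sum>k<m. (t ^ k / fact k) *\<^sub>R nth_deriv k f 0)
       + (t ^ m / fact m) *\<^sub>R nth_deriv m f 0"
      by (simp add: lessThan_Suc_atMost[symmetric])
    also have "(\<Sum>k<m. (t ^ k / fact k) *\<^sub>R nth_deriv k f 0) = 0" using z by (intro sum.neutral) auto
    finally show ?thesis by simp
  qed
  then show ?thesis using taylor_smooth[OF assms(1-3), of m]
    by (intro exI[of _ "(1 / fact m) *\<^sub>R nth_deriv m f 0"]) simp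
qed

lemma sum_two:
  fixes A B :: "'b::real_normed_vector"
  assumes "p \<le> N" "q \<le> N" "p \<noteq> q"
  shows "(\<Sum>k\<le>N. t ^ k *\<^sub>R (if k = p then A else if k = q then B else 0)) = t ^ p *\<^sub>R A + t ^ q *\<^sub>R B"
proof -
  have "(\<Sum>k\<le>N. t ^ k *\<^sub>R (if k = p then A else if k = q then B else 0)) =
        (\<Sum>k\<le>N. (if k = p then t ^ p *\<^sub>R A else 0) + (if k = q then t ^ q *\<^sub>R B else 0))"
    using assms(3) by (intro sum.cong) auto
  also have "\<dots> = t ^ p *\<^sub>R A + t ^ q *\<^sub>R B"
    using assms by (simp add: sum.distrib)
  finally show ?thesis .
qed

lemma two_term_coeff:
  fixes f :: "real \<Rightarrow> 'b::real_normed_vector"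
  assumes "open S" "0 \<in> S" "smooth1 S f"
    and O: "O0 (m + 2) (\<lambda>t. f t - (t ^ m *\<^sub>R A + t ^ (m + 1) *\<^sub>R B))"
  shows "(\<forall>k<m. nth_deriv k f 0 = 0) \<and> nth_deriv m f 0 = fact m *\<^sub>R A \<and>
         nth_deriv (m + 1) f 0 = fact (m + 1) *\<^sub>R B"
proof -
  define c where "c k = (if k = m then A else if k = m + 1 then B else 0)" for k
  have "(\<Sum>k\<le>m + 1. t ^ k *\<^sub>R c k) = t ^ m *\<^sub>R A + t ^ (m + 1) *\<^sub>R B" for t
    unfolding c_def by (rule sum_two) auto
  then have O': "O0 (Suc (m + 1)) (\<lambda>t. f t - (\<Sum>k\<le>m + 1. t ^ k *\<^sub>R c k))" using O by simp
  have "nth_deriv k f 0 = fact k *\<^sub>R c k" if "k \<le> m + 1" for k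
    by (rule coeff_smooth[OF assms(1-3) O' that])
  then show ?thesis unfolding c_def by auto
qed

lemma fact_Suc_div: "fact (Suc k) / fact k = (real (Suc k) :: real)"
proof -
  have "fact (Suc k) = (real (Suc k) :: real) * fact k" by (rule fact_Suc)
  then show ?thesis by simp
qed

lemma deriv_expansion:
  fixes f :: "real \<Rightarrow> 'b::real_normed_vector"
  assumes "open S" "0 \<in> S" "smooth1 S f" "1 \<le> m"
    and O: "O0 (m + 2) (\<lambda>t. f t - (t ^ m *\<^sub>R A + t ^ (m + 1) *\<^sub>R B))"
  shows "O0 (m + 1) (\<lambda>t. nth_deriv 1 f t - (t ^ (m - 1) *\<^sub>R (real m *\<^sub>R A) + t ^ m *\<^sub>R (real (m + 1) *\<^sub>R B)))"
proof -
  have co: "(\<forall>k<m. nth_deriv k f 0 = 0) \<and> nth_deriv m f 0 = fact m *\<^sub>R A \<and>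
         nth_deriv (m + 1) f 0 = fact (m + 1) *\<^sub>R B" by (rule two_term_coeff[OF assms(1-3) O])
  have sm: "smooth1 S (nth_deriv 1 f)" using smooth1_nth[OF assms(1,3)] by blast
  have T: "O0 (Suc m) (\<lambda>t. nth_deriv 1 f t - (\<Sum>k\<le>m. (t ^ k / fact k) *\<^sub>R nth_deriv k (nth_deriv 1 f) 0))"
    by (rule taylor_smooth[OF assms(1,2) sm])
  define c where "c k = (if k = m - 1 then real m *\<^sub>R A else if k = m then real (m + 1) *\<^sub>R B else 0)" for k
  have "(t ^ k / fact k) *\<^sub>R nth_deriv k (nth_deriv 1 f) 0 = t ^ k *\<^sub>R c k" if "k \<le> m" for k t
  proof -
    have e: "nth_deriv k (nth_deriv 1 f) 0 = nth_deriv (Suc k) f 0" by (simp only: nth_deriv_Suc'[of k f])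
    have "Suc k < m \<or> Suc k = m \<or> Suc k = m + 1" using that by linarith
    then consider "Suc k < m" | "Suc k = m" | "Suc k = m + 1" by blast
    then show ?thesis
    proof cases
      case 1
      then have "nth_deriv (Suc k) f 0 = 0" using co by simp
      moreover have "c k = 0" using 1 unfolding c_def by auto
      ultimately show ?thesis using e by simp
    next
      case 2
      then have d: "nth_deriv (Suc k) f 0 = fact (Suc k) *\<^sub>R A" using co by simp
      have ck: "c k = real m *\<^sub>R A" using 2 unfolding c_def by auto
      have "(t ^ k / fact k) *\<^sub>R nth_deriv k (nth_deriv 1 f) 0 = (t ^ k * (fact (Suc k) / fact k)) *\<^sub>R A"
        using e d by simp
      also have "fact (Suc k) / fact k = real (Suc k)" by (rule fact_Suc_div)
      finally show ?thesis using ck 2 by simp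
    next
      case 3
      then have d: "nth_deriv (Suc k) f 0 = fact (Suc k) *\<^sub>R B" using co by simp
      have km: "k = m" "k \<noteq> m - 1" using 3 assms(4) by auto
      have ck: "c k = real (m + 1) *\<^sub>R B" unfolding c_def using km by simp
      have "(t ^ k / fact k) *\<^sub>R nth_deriv k (nth_deriv 1 f) 0 = (t ^ k * (fact (Suc k) / fact k)) *\<^sub>R B"
        using e d by simp
      also have "fact (Suc k) / fact k = real (Suc k)" by (rule fact_Suc_div)
      finally show ?thesis using ck 3 by simp
    qed
  qed
  then have "(\<Sum>k\<le>m. (t ^ k / fact k) *\<^sub>R nth_deriv k (nth_deriv 1 f) 0) = (\<Sum>k\<le>m. t ^ k *\<^sub>R c k)" for t
    by (intro sum.cong) auto
  also have "(\<Sum>k\<le>m. t ^ k *\<^sub>R c k) = t ^ (m - 1) *\<^sub>R (real m *\<^sub>R A) + t ^ m *\<^sub>R (real (m + 1) *\<^sub>R B)" for t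
    unfolding c_def using assms(4) by (intro sum_two) auto
  finally show ?thesis using T by simp
qed

section \<open>Chain rule with plane maps\<close>

lemma plane_chain_vd:
  fixes G :: "real \<times> real \<Rightarrow> 'c::real_normed_vector"
  assumes "G differentiable (at (F t))" "(F has_vector_derivative F') (at t)"
  shows "((\<lambda>t. G (F t)) has_vector_derivative
      (fst F' *\<^sub>R frechet_derivative G (at (F t)) (1, 0) +
       snd F' *\<^sub>R frechet_derivative G (at (F t)) (0, 1))) (at t)"
proof -
  let ?D = "frechet_derivative G (at (F t))"
  have lin: "linear ?D" using assms(1) linear_frechet_derivative by blast
  have gd: "(G has_derivative ?D) (at (F t))" using assms(1) frechet_derivative_works by blast
  have fd: "(F has_derivative (\<lambda>h. h *\<^sub>R F')) (at t)" using assms(2) has_vector_derivative_def by blast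
  have "((G \<circ> F) has_derivative (?D \<circ> (\<lambda>h. h *\<^sub>R F'))) (at t)"
    by (rule diff_chain_at[OF fd gd])
  moreover have "(?D \<circ> (\<lambda>h. h *\<^sub>R F')) = (\<lambda>h. h *\<^sub>R (fst F' *\<^sub>R ?D (1, 0) + snd F' *\<^sub>R ?D (0, 1)))"
  proof
    fix h :: real
    have F': "F' = fst F' *\<^sub>R (1, 0) + snd F' *\<^sub>R (0, 1)" by (simp add: prod_eq_iff)
    have "?D (h *\<^sub>R F') = h *\<^sub>R ?D F'" using linear_scale[OF lin] by blast
    also have "?D F' = ?D (fst F' *\<^sub>R (1, 0) + snd F' *\<^sub>R (0, 1))" using F' by metis
    also have "\<dots> = fst F' *\<^sub>R ?D (1, 0) + snd F' *\<^sub>R ?D (0, 1)"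
      by (simp only: linear_add[OF lin] linear_scale[OF lin])
    finally show "(?D \<circ> (\<lambda>h. h *\<^sub>R F')) h = h *\<^sub>R (fst F' *\<^sub>R ?D (1, 0) + snd F' *\<^sub>R ?D (0, 1))"
      by simp
  qed
  ultimately show ?thesis unfolding has_vector_derivative_def by (simp add: o_def)
qed

lemma Ck_on_Ck1_comp:
  fixes G :: "real \<times> real \<Rightarrow> 'c::real_normed_vector"
  shows "Ck_on k V G \<Longrightarrow> Ck1 k S F \<Longrightarrow> F ` S \<subseteq> V \<Longrightarrow> Ck1 k S (\<lambda>t. G (F t))"
proof (induction k arbitrary: G F)
  case 0 then show ?case using continuous_on_compose2 by (metis Ck1.simps(1) Ck_on.simps(1))
next
  case (Suc k)
  have Gd: "\<forall>x\<in>V. G differentiable (at x)" and Gk: "\<And>v. Ck_on k V (\<lambda>x. frechet_derivative G (at x) v)"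
    using Suc.prems(1) by auto
  obtain F' where Fd: "\<forall>x\<in>S. (F has_vector_derivative F' x) (at x)" and F'c: "Ck1 k S F'"
    using Suc.prems(2) by auto
  have Fk: "Ck1 k S F" using Suc.prems(2) Ck1_Suc_imp by blast
  have "\<forall>t\<in>S. ((\<lambda>t. G (F t)) has_vector_derivative
      (fst (F' t) *\<^sub>R frechet_derivative G (at (F t)) (1, 0) +
       snd (F' t) *\<^sub>R frechet_derivative G (at (F t)) (0, 1))) (at t)"
    using plane_chain_vd Gd Fd Suc.prems(3) by blast
  moreover have "Ck1 k S (\<lambda>t. fst (F' t) *\<^sub>R frechet_derivative G (at (F t)) (1, 0) +
       snd (F' t) *\<^sub>R frechet_derivative G (at (F t)) (0, 1))"
    using Suc.IH[OF Gk Fk Suc.prems(3)] F'c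
    by (intro Ck1_add Ck1_scaleR Ck1_fst Ck1_snd) auto
  ultimately show ?case by auto
qed

lemma Ck_on_const: "Ck_on k S (\<lambda>x. c)"
proof (induction k arbitrary: c)
  case 0 then show ?case by simp
next
  case (Suc k)
  have "frechet_derivative (\<lambda>x. c) (at x) = (\<lambda>h. 0)" for x
    by (rule frechet_derivative_at[symmetric]) (rule has_derivative_const)
  then show ?case using Suc by simp
qed

definition aff :: "real \<Rightarrow> real \<Rightarrow> real \<Rightarrow> real \<Rightarrow> real \<Rightarrow> real \<Rightarrow> real \<times> real \<Rightarrow> real \<times> real" where
  "aff a1 b1 c1 a2 b2 c2 z = (a1 * fst z + b1 * snd z + c1, a2 * fst z + b2 * snd z + c2)"

lemma aff_has_derivative:
  "(aff a1 b1 c1 a2 b2 c2 has_derivative (\<lambda>h. (a1 * fst h + b1 * snd h, a2 * fst h + b2 * snd h))) (at x)"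
  unfolding aff_def by (auto intro!: derivative_eq_intros)

lemma Ck_on_aff: "Ck_on k S (aff a1 b1 c1 a2 b2 c2)"
proof (cases k)
  case 0
  have "continuous_on S (aff a1 b1 c1 a2 b2 c2)" unfolding aff_def by (intro continuous_intros)
  then show ?thesis using 0 by simp
next
  case (Suc m)
  have fd: "frechet_derivative (aff a1 b1 c1 a2 b2 c2) (at x) = (\<lambda>h. (a1 * fst h + b1 * snd h, a2 * fst h + b2 * snd h))" for x
    using frechet_derivative_at[OF aff_has_derivative] by simp
  have "\<forall>x\<in>S. aff a1 b1 c1 a2 b2 c2 differentiable (at x)"
    using aff_has_derivative differentiable_def by blast
  then show ?thesis using Suc fd by (simp add: Ck_on_const)
qed

lemma smooth_on_aff: "smooth_on S (aff a1 b1 c1 a2 b2 c2)"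
  unfolding smooth_on_def using Ck_on_aff by blast

section \<open>1D inverse function theorem\<close>

lemma ift1:
  fixes \<phi> :: "real \<Rightarrow> real"
  assumes sm: "smooth1 UNIV \<phi>" and z: "\<phi> 0 = 0" and d1: "(\<phi> has_real_derivative 1) (at 0)"
  shows "\<exists>\<psi>. \<psi> 0 = 0 \<and> local_diffeo_at 0 \<psi> \<phi>"
proof -
  define \<phi>' where "\<phi>' = nth_deriv 1 \<phi>"
  have der: "(\<phi> has_real_derivative \<phi>' x) (at x)" for x
    using smooth1_nth[OF open_UNIV sm, of 0] unfolding \<phi>'_def
    by (simp add: has_real_derivative_iff_has_vector_derivative)
  have sm': "smooth1 UNIV \<phi>'" unfolding \<phi>'_def using smooth1_nth[OF open_UNIV sm] by blast
  have cont': "continuous_on UNIV \<phi>'" using sm' unfolding smooth1_def using Ck1_cont by blast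
  have p0: "\<phi>' 0 = 1" using der[of 0] d1 DERIV_unique by blast
  have "isCont \<phi>' 0" using cont' by (simp add: continuous_on_eq_continuous_at)
  then obtain d0 where d0: "0 < d0" "\<And>x. dist x 0 < d0 \<Longrightarrow> dist (\<phi>' x) (\<phi>' 0) < 1/2"
    unfolding continuous_at_eps_delta by (metis half_gt_zero_iff zero_less_one)
  define \<delta> where "\<delta> = d0 / 2"
  have \<delta>: "0 < \<delta>" using d0 by (simp add: \<delta>_def)
  have pos: "\<phi>' x > 1/2" if "\<bar>x\<bar> \<le> \<delta>" for x
  proof -
    have "dist x 0 < d0" using that d0 by (simp add: \<delta>_def dist_norm)
    then have "\<bar>\<phi>' x - 1\<bar> < 1/2" using d0(2) p0 by (simp add: dist_norm)
    then show ?thesis by linarith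
  qed
  define K where "K = {-\<delta>..\<delta>}"
  define W where "W = {-\<delta><..<\<delta>}"
  have WK: "W \<subseteq> K" unfolding W_def K_def by auto
  have incr: "\<phi> x < \<phi> y" if "x \<in> K" "y \<in> K" "x < y" for x y
  proof (rule DERIV_pos_imp_increasing[OF that(3)])
    fix u assume "x \<le> u" "u \<le> y"
    then have "\<bar>u\<bar> \<le> \<delta>" using that unfolding K_def by auto
    then show "\<exists>y. DERIV \<phi> u :> y \<and> y > 0" using der pos by (meson less_trans zero_less_divide_1_iff zero_less_numeral)
  qed
  have inj: "inj_on \<phi> K"
    by (rule inj_onI) (metis incr linorder_neqE_linordered_idom order_less_irrefl)
  define \<psi> where "\<psi> = the_inv_into K \<phi>"
  have \<psi>\<phi>: "\<psi> (\<phi> x) = x" if "x \<in> K" for x using the_inv_into_f_f[OF inj that] by (simp add: \<psi>_def)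
  have \<phi>\<psi>: "\<phi> (\<psi> y) = y" if "y \<in> \<phi> ` K" for y using f_the_inv_into_f[OF inj that] by (simp add: \<psi>_def)
  have \<psi>K: "\<psi> y \<in> K" if "y \<in> \<phi> ` K" for y using that \<psi>\<phi> by auto
  define V where "V = {\<phi> (-\<delta>)<..<\<phi> \<delta>}"
  have cphi: "continuous_on UNIV \<phi>" using sm unfolding smooth1_def using Ck1_cont by blast
  have V: "\<phi> ` W = V"
  proof
    show "\<phi> ` W \<subseteq> V" unfolding V_def W_def
      using incr \<delta> unfolding K_def by (auto simp: abs_le_iff)
  next
    show "V \<subseteq> \<phi> ` W"
    proof
      fix y assume y: "y \<in> V"
      then have "\<phi> (-\<delta>) \<le> y" "y \<le> \<phi> \<delta>" unfolding V_def by auto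
      then obtain x where x: "-\<delta> \<le> x" "x \<le> \<delta>" "\<phi> x = y"
        using IVT'[of \<phi> "-\<delta>" y \<delta>] \<delta> continuous_on_subset[OF cphi] by auto
      then have "x \<noteq> -\<delta>" "x \<noteq> \<delta>" using y unfolding V_def by auto
      then have "x \<in> W" using x unfolding W_def by auto
      then show "y \<in> \<phi> ` W" using x by auto
    qed
  qed
  have VK: "V \<subseteq> \<phi> ` K" using V WK by auto
  have \<psi>V: "\<psi> ` V = W" using V WK \<psi>\<phi> by force
  have cpsi: "continuous_on (\<phi> ` K) \<psi>"
    unfolding \<psi>_def K_def
    by (rule continuous_on_inv) (use continuous_on_subset[OF cphi] the_inv_into_f_f[OF inj] K_def in auto)
  have oV: "open V" unfolding V_def by simp
  have cpsiV: "continuous_on V \<psi>" using continuous_on_subset[OF cpsi VK] .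
  have dpsi: "(\<psi> has_real_derivative inverse (\<phi>' (\<psi> y))) (at y)" if "y \<in> V" for y
  proof (rule DERIV_inverse_function[where a="\<phi> (-\<delta>)" and b="\<phi> \<delta>"])
    show "DERIV \<phi> (\<psi> y) :> \<phi>' (\<psi> y)" by (rule der)
    have "\<psi> y \<in> K" using \<psi>K VK that by auto
    then have "\<bar>\<psi> y\<bar> \<le> \<delta>" unfolding K_def by auto
    then show "\<phi>' (\<psi> y) \<noteq> 0" using pos[of "\<psi> y"] by linarith
    show "\<phi> (-\<delta>) < y" "y < \<phi> \<delta>" using that unfolding V_def by auto
    show "\<phi> (\<psi> z) = z" if "\<phi> (- \<delta>) < z" "z < \<phi> \<delta>" for z
      using \<phi>\<psi> VK that unfolding V_def by auto
    show "isCont \<psi> y" using cpsiV oV that continuous_on_eq_continuous_at by blast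
  qed
  have nz: "\<phi>' (\<psi> y) \<noteq> 0" if "y \<in> V" for y
  proof -
    have "\<psi> y \<in> K" using \<psi>K VK that by auto
    then have "\<bar>\<psi> y\<bar> \<le> \<delta>" unfolding K_def by auto
    then show ?thesis using pos[of "\<psi> y"] by linarith
  qed
  have Ck: "Ck1 k V \<psi>" for k
  proof (induction k)
    case 0 then show ?case using cpsiV by simp
  next
    case (Suc k)
    have "\<forall>y\<in>V. (\<psi> has_vector_derivative inverse (\<phi>' (\<psi> y))) (at y)"
      using dpsi by (simp add: has_real_derivative_iff_has_vector_derivative)
    moreover have "Ck1 k V (\<lambda>y. inverse (\<phi>' (\<psi> y)))"
    proof -
      have c1: "Ck1 k UNIV \<phi>'" using sm' unfolding smooth1_def by blast
      have c2: "Ck1 k V (\<lambda>y. \<phi>' (\<psi> y))" by (rule Ck1_comp[OF c1 Suc.IH]) auto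
      show ?thesis by (rule Ck1_inverse[OF c2 nz])
    qed
    ultimately show ?case by auto
  qed
  have oW: "open W" unfolding W_def by simp
  have 0: "0 \<in> W" unfolding W_def using \<delta> by auto
  have s1: "smooth1 V \<psi>" unfolding smooth1_def using Ck by blast
  have s1': "smooth_on V \<psi>" using smooth_on_smooth1[OF oV] s1 by blast
  have s2: "smooth1 W \<phi>" by (rule smooth1_subset[OF _ sm]) simp
  have s2': "smooth_on W \<phi>" using smooth_on_smooth1[OF oW] s2 by blast
  have i1: "\<forall>x\<in>V. \<phi> (\<psi> x) = x" using \<phi>\<psi> VK by auto
  have i2: "\<forall>y\<in>W. \<psi> (\<phi> y) = y" using \<psi>\<phi> WK by auto
  have v0: "0 \<in> V" using 0 V z by force
  have "local_diffeo_at 0 \<psi> \<phi>"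
    unfolding local_diffeo_at_def
    by (rule exI[of _ V], rule exI[of _ W]) (use oV oW v0 \<psi>V V s1' s2' i1 i2 in simp)
  moreover have "\<psi> 0 = 0" using \<psi>\<phi>[of 0] z \<delta> unfolding K_def by auto
  ultimately show ?thesis by blast
qed

section \<open>Power expansions\<close>

lemma binom_sq: "\<exists>B. \<forall>q::real. \<bar>q\<bar> \<le> 1 \<longrightarrow> \<bar>(1 + q) ^ m - 1 - real m * q\<bar> \<le> B * q ^ 2"
proof (induction m)
  case 0 then show ?case by (intro exI[of _ 0]) simp
next
  case (Suc m)
  then obtain B where B: "\<And>q::real. \<bar>q\<bar> \<le> 1 \<Longrightarrow> \<bar>(1 + q) ^ m - 1 - real m * q\<bar> \<le> B * q ^ 2" by blast
  show ?case
  proof (intro exI[of _ "2 * B + real m"] allI impI)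
    fix q :: real assume q: "\<bar>q\<bar> \<le> 1"
    define e where "e = (1 + q) ^ m - 1 - real m * q"
    have id: "(1 + q) ^ Suc m - 1 - real (Suc m) * q = (1 + q) * e + real m * q ^ 2"
      unfolding e_def by (simp add: algebra_simps power2_eq_square)
    have eb: "\<bar>e\<bar> \<le> B * q ^ 2" using B[OF q] unfolding e_def .
    have "\<bar>(1 + q) * e\<bar> \<le> 2 * \<bar>e\<bar>"
    proof -
      have "\<bar>1 + q\<bar> \<le> 2" using q by linarith
      then show ?thesis by (simp add: abs_mult mult_right_mono)
    qed
    moreover have "\<bar>(1 + q) * e + real m * q ^ 2\<bar> \<le> \<bar>(1 + q) * e\<bar> + \<bar>real m * q ^ 2\<bar>"
      by (rule abs_triangle_ineq)
    moreover have "\<bar>real m * q ^ 2\<bar> = real m * q ^ 2" by simp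
    ultimately have "\<bar>(1 + q) * e + real m * q ^ 2\<bar> \<le> 2 * (B * q ^ 2) + real m * q ^ 2"
      using eb by linarith
    then show "\<bar>(1 + q) ^ Suc m - 1 - real (Suc m) * q\<bar> \<le> (2 * B + real m) * q ^ 2"
      unfolding id by (simp add: algebra_simps)
  qed
qed

definition rep :: "real \<Rightarrow> nat \<Rightarrow> real \<Rightarrow> real" where
  "rep p j s = s + p * s ^ j"

lemma pow_phi:
  assumes "2 \<le> j"
  shows "O0 (m + 2 * j - 2) (\<lambda>s. rep p j s ^ m - s ^ m - real m * p * s ^ (m + j - 1))"
proof -
  from le_Suc_ex[OF assms] obtain i where ji: "j = 2 + i" by blast
  obtain B where B: "\<And>q::real. \<bar>q\<bar> \<le> 1 \<Longrightarrow> \<bar>(1 + q) ^ m - 1 - real m * q\<bar> \<le> B * q ^ 2"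
    using binom_sq by blast
  have e1: "m + 2 * j - 2 = m + 2 * (i + 1)" "m + j - 1 = m + (i + 1)" using ji by auto
  show ?thesis unfolding e1
  proof (rule O0I[of "1 / (\<bar>p\<bar> + 1)" _ "B * p ^ 2"])
    show "0 < 1 / (\<bar>p\<bar> + 1)" by simp
  next
    fix s :: real assume s: "\<bar>s\<bar> < 1 / (\<bar>p\<bar> + 1)"
    have "1 / (\<bar>p\<bar> + 1) \<le> 1" by simp
    then have s1: "\<bar>s\<bar> < 1" using s by linarith
    define q where "q = p * s ^ (i + 1)"
    have "\<bar>s\<bar> ^ (i + 1) \<le> \<bar>s\<bar> ^ 1" using s1 by (intro power_decreasing) auto
    then have "\<bar>q\<bar> \<le> \<bar>p\<bar> * \<bar>s\<bar>" unfolding q_def by (simp add: abs_mult power_abs mult_left_mono)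
    also have "\<dots> \<le> 1"
    proof -
      have "\<bar>p\<bar> * \<bar>s\<bar> \<le> (\<bar>p\<bar> + 1) * \<bar>s\<bar>" by (intro mult_right_mono) auto
      also have "\<dots> \<le> 1" using s by (simp add: field_simps)
      finally show ?thesis .
    qed
    finally have q1: "\<bar>q\<bar> \<le> 1" .
    have "rep p j s = s * (1 + q)" unfolding rep_def q_def ji by (simp add: algebra_simps)
    then have r: "rep p j s ^ m = s ^ m * (1 + q) ^ m" by (simp only: power_mult_distrib)
    have sp: "s ^ (m + (i + 1)) = s ^ m * s ^ (i + 1)" by (simp only: power_add)
    have "rep p j s ^ m - s ^ m - real m * p * s ^ (m + (i + 1)) = s ^ m * ((1 + q) ^ m - 1 - real m * q)"
      unfolding r sp by (simp add: q_def algebra_simps)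
    then have "\<bar>rep p j s ^ m - s ^ m - real m * p * s ^ (m + (i + 1))\<bar> \<le> \<bar>s\<bar> ^ m * (B * q ^ 2)"
      using B[OF q1] by (simp add: abs_mult power_abs mult_left_mono)
    also have "\<bar>s\<bar> ^ m * (B * q ^ 2) = (B * p ^ 2) * \<bar>s\<bar> ^ (m + 2 * (i + 1))"
    proof -
      have "q ^ 2 = p ^ 2 * (s ^ (i + 1)) ^ 2" unfolding q_def by (simp add: power_mult_distrib)
      also have "(s ^ (i + 1)) ^ 2 = \<bar>s ^ (i + 1)\<bar> ^ 2" by (rule power2_abs[symmetric])
      also have "\<dots> = (\<bar>s\<bar> ^ (i + 1)) ^ 2" by (simp only: power_abs)
      also have "\<dots> = \<bar>s\<bar> ^ (2 * (i + 1))" by (simp only: power_mult[symmetric] mult.commute)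
      finally show ?thesis by (simp add: power_add algebra_simps)
    qed
    finally show "norm (rep p j s ^ m - s ^ m - real m * p * s ^ (m + (i + 1))) \<le> B * p\<^sup>2 * \<bar>s\<bar> ^ (m + 2 * (i + 1))"
      by simp
  qed
qed

lemma rep_smooth: "smooth1 UNIV (rep p j)"
  unfolding smooth1_def rep_def by (intro allI Ck1_add Ck1_id Ck1_mult Ck1_const Ck1_pow)

lemma rep_0: "1 \<le> j \<Longrightarrow> rep p j 0 = 0"
  unfolding rep_def by simp

lemma rep_deriv: "2 \<le> j \<Longrightarrow> (rep p j has_real_derivative 1) (at 0)"
proof -
  assume j: "2 \<le> j"
  from le_Suc_ex[OF j] obtain i where ji: "j = 2 + i" by blast
  have "(rep p j has_real_derivative 1 + p * (real j * 0 ^ (j - 1))) (at 0)"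
    unfolding rep_def by (auto intro!: derivative_eq_intros)
  then show "(rep p j has_real_derivative 1) (at 0)" unfolding ji by simp
qed

lemma O0_iff_abs: "O0 m (f :: real \<Rightarrow> real) \<longleftrightarrow> (\<exists>C \<delta>. 0 < \<delta> \<and> (\<forall>s. \<bar>s\<bar> < \<delta> \<longrightarrow> \<bar>f s\<bar> \<le> C * \<bar>s\<bar> ^ m))"
  unfolding O0_def by simp

lemma rep_O1: "1 \<le> j \<Longrightarrow> O0 1 (rep p j)"
proof -
  assume j: "1 \<le> j"
  show ?thesis
  proof (rule O0I[of 1 _ "1 + \<bar>p\<bar>"])
    fix s :: real assume s: "\<bar>s\<bar> < 1"
    have "\<bar>s\<bar> ^ j \<le> \<bar>s\<bar> ^ 1" using s j by (intro power_decreasing) auto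
    then have "\<bar>p * s ^ j\<bar> \<le> \<bar>p\<bar> * \<bar>s\<bar>" by (simp add: abs_mult power_abs mult_left_mono)
    then show "norm (rep p j s) \<le> (1 + \<bar>p\<bar>) * \<bar>s\<bar> ^ 1"
      unfolding rep_def using abs_triangle_ineq[of s "p * s ^ j"] by (simp add: algebra_simps)
  qed simp
qed

lemma rep_pow_weak:
  assumes "2 \<le> j" shows "O0 (m + j - 1) (\<lambda>s. rep p j s ^ m - s ^ m)"
proof -
  have a: "O0 (m + j - 1) (\<lambda>s. rep p j s ^ m - s ^ m - real m * p * s ^ (m + j - 1))"
    using O0_mono[OF _ pow_phi[OF assms]] assms by simp
  have b: "O0 (m + j - 1) (\<lambda>s. real m * p * s ^ (m + j - 1))" by (rule O0_monom_real) simp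
  show ?thesis using O0_add[OF a b] by simp
qed

lemma passive_lem:
  fixes f :: "real \<Rightarrow> real"
  assumes f: "O0 r (\<lambda>t. f t - t ^ m)" and j: "2 \<le> j" and q: "q \<le> r" "q \<le> m + j - 1"
  shows "O0 q (\<lambda>s. f (rep p j s) - s ^ m)"
proof -
  have a: "O0 r (\<lambda>s. f (rep p j s) - rep p j s ^ m)"
    using O0_comp[OF f rep_O1] j by simp
  have b: "O0 (m + j - 1) (\<lambda>s. rep p j s ^ m - s ^ m)" by (rule rep_pow_weak[OF j])
  have "O0 q (\<lambda>s. (f (rep p j s) - rep p j s ^ m) + (rep p j s ^ m - s ^ m))"
    by (rule O0_add[OF O0_mono[OF q(1) a] O0_mono[OF q(2) b]])
  then show ?thesis by simp
qed

lemma active_lem: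
  fixes f :: "real \<Rightarrow> real"
  assumes f: "O0 (Suc k) (\<lambda>t. f t - t ^ m - a * t ^ k)" and km: "m + 1 \<le> k" and j: "j = k - m + 1"
  shows "O0 (Suc k) (\<lambda>s. f (rep p j s) - s ^ m - (real m * p + a) * s ^ k)"
proof -
  have j2: "2 \<le> j" using km j by simp
  have t1: "O0 (Suc k) (\<lambda>s. f (rep p j s) - rep p j s ^ m - a * rep p j s ^ k)"
    using O0_comp[OF f rep_O1] j2 by simp
  have le: "Suc k \<le> m + 2 * j - 2" using km j by simp
  have t2: "O0 (Suc k) (\<lambda>s. rep p j s ^ m - s ^ m - real m * p * s ^ (m + j - 1))"
    by (rule O0_mono[OF le pow_phi[OF j2]])
  have "O0 (Suc k) (\<lambda>s. rep p j s ^ k - s ^ k)"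
    by (rule O0_mono[OF _ rep_pow_weak[OF j2]]) (use km j in simp)
  from O0_cscale[OF this, of a] have t3: "O0 (Suc k) (\<lambda>s. a * (rep p j s ^ k - s ^ k))" by simp
  have e: "m + j - 1 = k" using km j by simp
  have "O0 (Suc k) (\<lambda>s. (f (rep p j s) - rep p j s ^ m - a * rep p j s ^ k) +
       (rep p j s ^ m - s ^ m - real m * p * s ^ (m + j - 1)) + a * (rep p j s ^ k - s ^ k))"
    by (rule O0_add[OF O0_add[OF t1 t2] t3])
  then show ?thesis unfolding e by (simp add: algebra_simps)
qed

lemma O0_pow: "O0 1 u \<Longrightarrow> O0 m (\<lambda>t. (u t :: real) ^ m)"
proof (induction m)
  case 0
  then show ?case by (rule_tac O0I[of 1 _ 1]) auto
next
  case (Suc m)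
  then show ?case using O0_mult[of 1 u m "\<lambda>t. u t ^ m"] by simp
qed

lemma upow:
  fixes u :: "real \<Rightarrow> real"
  assumes U: "O0 3 (\<lambda>t. u t - (a * t + b * t ^ 2))"
  shows "O0 (m + 2) (\<lambda>t. u t ^ m - (a ^ m * t ^ m + real m * a ^ (m - 1) * b * t ^ (m + 1)))"
proof (induction m)
  case 0 then show ?case by (simp add: O0_zero)
next
  case (Suc m)
  define A where "A k t = a ^ k * t ^ k + real k * a ^ (k - 1) * b * t ^ (k + 1)" for k and t :: real
  have u1: "O0 1 u"
  proof -
    have "O0 1 (\<lambda>t. (u t - (a * t + b * t ^ 2)) + (a * t + b * t ^ 2))"
      using O0_add[OF O0_mono[OF _ U] O0_add[OF O0_monom_real[of 1 1 a] O0_monom_real[of 1 2 b]]] by simp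
    then show ?thesis by simp
  qed
  have Am: "O0 m (A m)" unfolding A_def by (intro O0_add O0_monom_real) auto
  have id: "A 1 t * A m t - A (Suc m) t = real m * a ^ (m - 1) * b ^ 2 * t ^ (m + 3)" for t
  proof (cases m)
    case 0 then show ?thesis unfolding A_def by (simp add: algebra_simps power2_eq_square)
  next
    case (Suc i)
    then show ?thesis unfolding A_def by (simp add: algebra_simps power2_eq_square power_add eval_nat_numeral)
  qed
  have pe: "u t ^ Suc m - A (Suc m) t = u t * (u t ^ m - A m t) + (u t - A 1 t) * A m t + (A 1 t * A m t - A (Suc m) t)" for t
    by (simp add: algebra_simps)
  have "O0 (Suc m + 2) (\<lambda>t. u t * (u t ^ m - A m t) + (u t - A 1 t) * A m t + (A 1 t * A m t - A (Suc m) t))"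
  proof (intro O0_add)
    show "O0 (Suc m + 2) (\<lambda>t. u t * (u t ^ m - A m t))"
      using O0_mult[OF u1 Suc.IH] unfolding A_def by simp
    have "O0 3 (\<lambda>t. u t - A 1 t)" using U unfolding A_def by (simp add: power2_eq_square)
    from O0_mult[OF this Am] have "O0 (3 + m) (\<lambda>t. (u t - A 1 t) * A m t)" .
    moreover have "3 + m = Suc m + 2" by simp
    ultimately show "O0 (Suc m + 2) (\<lambda>t. (u t - A 1 t) * A m t)" by metis
    show "O0 (Suc m + 2) (\<lambda>t. A 1 t * A m t - A (Suc m) t)"
      unfolding id by (rule O0_monom_real) simp
  qed
  then have "O0 (Suc m + 2) (\<lambda>t. u t ^ Suc m - A (Suc m) t)" unfolding pe .
  then show ?case unfolding A_def by simp
qed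

lemma sum_three:
  fixes f :: "nat \<Rightarrow> 'b::real_normed_vector"
  assumes "1 \<le> n" "\<And>k. k \<in> {1..n-1} \<Longrightarrow> f k = 0"
  shows "(\<Sum>k\<le>n+1. f k) = f 0 + f n + f (n + 1)"
proof -
  have "(\<Sum>k\<le>n+1. f k) = (\<Sum>k\<in>{0, n, n+1}. f k)"
  proof (rule sum.mono_neutral_cong_right)
    show "\<forall>x\<in>{..n + 1} - {0, n, n + 1}. f x = 0"
    proof
      fix x assume "x \<in> {..n + 1} - {0, n, n + 1}"
      then have "x \<in> {1..n-1}" by auto
      then show "f x = 0" by (rule assms(2))
    qed
  qed auto
  also have "\<dots> = f 0 + f n + f (n + 1)" using assms(1) by (simp add: add.assoc)
  finally show ?thesis .
qed

lemma gamma_exp: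
  fixes \<gamma> :: "real \<Rightarrow> 'b::real_normed_vector"
  assumes "open I" "0 \<in> I" "smooth1 I \<gamma>" "1 \<le> n" "\<forall>k\<in>{1..n-1}. nth_deriv k \<gamma> 0 = 0"
  shows "O0 (n + 2) (\<lambda>t. \<gamma> t - \<gamma> 0 - t ^ n *\<^sub>R ((1 / fact n) *\<^sub>R nth_deriv n \<gamma> 0)
            - t ^ (n + 1) *\<^sub>R ((1 / fact (n + 1)) *\<^sub>R nth_deriv (n + 1) \<gamma> 0))"
proof -
  have T: "O0 (Suc (n + 1)) (\<lambda>t. \<gamma> t - (\<Sum>k\<le>n+1. (t ^ k / fact k) *\<^sub>R nth_deriv k \<gamma> 0))"
    by (rule taylor_smooth[OF assms(1-3)])
  have "(\<Sum>k\<le>n+1. (t ^ k / fact k) *\<^sub>R nth_deriv k \<gamma> 0) =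
     \<gamma> 0 + t ^ n *\<^sub>R ((1 / fact n) *\<^sub>R nth_deriv n \<gamma> 0) + t ^ (n + 1) *\<^sub>R ((1 / fact (n + 1)) *\<^sub>R nth_deriv (n + 1) \<gamma> 0)" for t
    using sum_three[OF assms(4), of "\<lambda>k. (t ^ k / fact k) *\<^sub>R nth_deriv k \<gamma> 0"] assms(5)
    by (simp add: divide_inverse_commute mult_ac)
  then show ?thesis using T by (simp add: algebra_simps)
qed

lemma open_rep_vimage: "open S \<Longrightarrow> open {s. rep p j s \<in> S}"
proof -
  assume "open S"
  have "continuous_on UNIV (rep p j)" unfolding rep_def by (intro continuous_intros)
  then show ?thesis using open_vimage[OF \<open>open S\<close>] by (simp add: vimage_def)
qed

lemma step_rep:
  assumes "open S" "0 \<in> S" "smooth1 S f" "2 \<le> j"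
  shows "open {s. rep p j s \<in> S}" "0 \<in> {s. rep p j s \<in> S}" "smooth1 {s. rep p j s \<in> S} (\<lambda>s. f (rep p j s))"
proof -
  show "open {s. rep p j s \<in> S}" by (rule open_rep_vimage[OF assms(1)])
  show "0 \<in> {s. rep p j s \<in> S}" using rep_0[of j p] assms by simp
  show "smooth1 {s. rep p j s \<in> S} (\<lambda>s. f (rep p j s))"
    unfolding smooth1_def
  proof
    fix k
    have a: "Ck1 k S f" using assms(3) unfolding smooth1_def by blast
    have b: "Ck1 k {s. rep p j s \<in> S} (rep p j)"
      using rep_smooth[of p j] Ck1_subset[of "{s. rep p j s \<in> S}" UNIV] unfolding smooth1_def by blast
    show "Ck1 k {s. rep p j s \<in> S} (\<lambda>s. f (rep p j s))" by (rule Ck1_comp[OF a b]) auto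
  qed
qed

lemma aff_diffeo:
  assumes D: "D = a1 * b2 - b1 * a2" "D \<noteq> 0"
  shows "local_diffeo_at p (aff a1 b1 c1 a2 b2 c2)
           (aff (b2 / D) (- (b1 / D)) ((b1 * c2 - b2 * c1) / D) (- (a2 / D)) (a1 / D) ((a2 * c1 - a1 * c2) / D))"
proof -
  let ?F = "aff a1 b1 c1 a2 b2 c2"
  let ?G = "aff (b2 / D) (- (b1 / D)) ((b1 * c2 - b2 * c1) / D) (- (a2 / D)) (a1 / D) ((a2 * c1 - a1 * c2) / D)"
  have GF: "?G (?F x) = x" for x
    using D(2) unfolding aff_def by (simp add: prod_eq_iff field_simps) (simp add: D(1) algebra_simps)
  have FG: "?F (?G y) = y" for y
    using D(2) unfolding aff_def by (simp add: prod_eq_iff field_simps) (simp add: D(1) algebra_simps)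
  have "surj ?F" by (rule surjI[of ?F ?G]) (rule FG)
  moreover have "surj ?G" by (rule surjI[of ?G ?F]) (rule GF)
  ultimately show ?thesis unfolding local_diffeo_at_def
    by (rule_tac exI[of _ "UNIV :: (real \<times> real) set"], rule_tac exI[of _ "UNIV :: (real \<times> real) set"])
       (simp add: smooth_on_aff GF FG)
qed

lemma det2_scale: "det2 (c1 *\<^sub>R L1) (c2 *\<^sub>R L1 + c3 *\<^sub>R L2) = c1 * c3 * det2 L1 L2"
  unfolding det2_def by (simp add: algebra_simps)

lemma det2_scale2: "det2 (c1 *\<^sub>R A) (c2 *\<^sub>R B) = c1 * c2 * det2 A B"
  unfolding det2_def by (simp add: algebra_simps)

lemma det2_zero_kernel:
  assumes "det2 L1 L2 = 0"
  shows "\<exists>v. v \<noteq> (0::real \<times> real) \<and> fst v *\<^sub>R L1 + snd v *\<^sub>R L2 = 0"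
proof -
  obtain p q r s where L: "L1 = (p, q)" "L2 = (r, s)" by (cases L1, cases L2) auto
  then have d: "p * s - q * r = 0" using assms unfolding det2_def by simp
  show ?thesis
  proof (cases "s \<noteq> 0 \<or> q \<noteq> 0")
    case True
    then show ?thesis using d L by (intro exI[of _ "(s, -q)"]) (auto simp: algebra_simps zero_prod_def)
  next
    case False
    then have sq: "s = 0" "q = 0" by auto
    show ?thesis
    proof (cases "r \<noteq> 0 \<or> p \<noteq> 0")
      case True
      then show ?thesis using d L sq by (intro exI[of _ "(-r, p)"]) (auto simp: algebra_simps zero_prod_def)
    next
      case False
      then show ?thesis using L sq by (intro exI[of _ "(1, 0)"]) (simp add: zero_prod_def)
    qed
  qed
qed

lemma nth_deriv_1: "nth_deriv 1 f t = vector_derivative f (at t)"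
  by (simp add: nth_deriv.simps(2))

lemma nth_deriv_fst:
  assumes "(F has_vector_derivative F') (at t)"
  shows "nth_deriv 1 (\<lambda>t. fst (F t)) t = fst F'" "nth_deriv 1 (\<lambda>t. snd (F t)) t = snd F'"
    "nth_deriv 1 F t = F'"
proof -
  have "((\<lambda>t. fst (F t)) has_vector_derivative fst F') (at t)"
    using assms unfolding has_vector_derivative_def by (auto intro!: derivative_eq_intros)
  then show "nth_deriv 1 (\<lambda>t. fst (F t)) t = fst F'" unfolding nth_deriv_1 by (rule vector_derivative_at)
  have "((\<lambda>t. snd (F t)) has_vector_derivative snd F') (at t)"
    using assms unfolding has_vector_derivative_def by (auto intro!: derivative_eq_intros)
  then show "nth_deriv 1 (\<lambda>t. snd (F t)) t = snd F'" unfolding nth_deriv_1 by (rule vector_derivative_at)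
  show "nth_deriv 1 F t = F'" unfolding nth_deriv_1 using assms by (rule vector_derivative_at)
qed

lemma open_ball_sub: "open S \<Longrightarrow> 0 \<in> S \<Longrightarrow> \<exists>\<delta>>0. \<forall>s::real. \<bar>s\<bar> < \<delta> \<longrightarrow> s \<in> S"
  by (metis open_contains_ball subset_iff mem_ball dist_0_norm real_norm_def)

lemma Ck1_divc: "Ck1 k S f \<Longrightarrow> Ck1 k S (\<lambda>x. (f x :: real) / c)"
  using Ck1_mult[OF _ Ck1_const, of k S f "inverse c"] by (simp add: divide_inverse)

lemma smooth1_intros:
  "smooth1 S (\<lambda>x. c)" "smooth1 S (\<lambda>x. x)"
  "smooth1 S f \<Longrightarrow> smooth1 S g \<Longrightarrow> smooth1 S (\<lambda>x. f x + g x)"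
  "smooth1 S f \<Longrightarrow> smooth1 S g \<Longrightarrow> smooth1 S (\<lambda>x. f x - g x)"
  "smooth1 S f \<Longrightarrow> smooth1 S g \<Longrightarrow> smooth1 S (\<lambda>x. (f x :: real) * g x)"
  "smooth1 S f \<Longrightarrow> smooth1 S (\<lambda>x. (f x :: real) / c)"
  "smooth1 S (\<lambda>x::real. x ^ j)"
  "smooth1 S F \<Longrightarrow> smooth1 S (\<lambda>x. fst (F x))"
  "smooth1 S F \<Longrightarrow> smooth1 S (\<lambda>x. snd (F x))"
  "smooth1 S f \<Longrightarrow> smooth1 S g \<Longrightarrow> smooth1 S (\<lambda>x. (f x :: real, g x :: real))"
  unfolding smooth1_def
  by (auto intro: Ck1_const Ck1_id Ck1_add Ck1_diff Ck1_mult Ck1_divc Ck1_pow Ck1_fst Ck1_snd Ck1_Pair)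

lemma forward:
  fixes \<gamma> :: "real \<Rightarrow> real \<times> real"
  assumes n2: "n \<ge> 2" and oI: "open I" and I0: "0 \<in> I" and sm: "smooth1 I \<gamma>"
    and H1: "\<forall>k\<in>{1..n-1}. nth_deriv k \<gamma> 0 = 0"
    and H2: "det2 (nth_deriv n \<gamma> 0) (nth_deriv (Suc n) \<gamma> 0) \<noteq> 0"
  shows "\<exists>T::real. \<exists>h :: real \<Rightarrow> real \<times> real. \<exists>J.
            open J \<and> 0 \<in> J \<and> smooth_on J h \<and>
            (\<forall>k\<le>n+3. nth_deriv k h 0 = 0) \<and>
            A_equiv_at0 \<gamma> (\<lambda>s. (s^n, s^(n+1) + T * s^(n+3)) + h s)"
proof -
  define A where "A = (1 / fact n) *\<^sub>R nth_deriv n \<gamma> 0"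
  define B where "B = (1 / fact (n + 1)) *\<^sub>R nth_deriv (n + 1) \<gamma> 0"
  have dAB: "det2 A B \<noteq> 0" unfolding A_def B_def det2_scale2 using H2 by simp
  define d where "d = det2 A B"
  have d0: "d \<noteq> 0" using dAB d_def by simp
  define x0 where "x0 = fst (\<gamma> 0)"
  define y0 where "y0 = snd (\<gamma> 0)"
  define Xf where "Xf z = (snd B * (fst z - x0) - fst B * (snd z - y0)) / d" for z :: "real \<times> real"
  define Yf where "Yf z = (fst A * (snd z - y0) - snd A * (fst z - x0)) / d" for z :: "real \<times> real"
  define X1 where "X1 t = Xf (\<gamma> t)" for t
  define Y1 where "Y1 t = Yf (\<gamma> t)" for t
  have R: "O0 (n + 2) (\<lambda>t. \<gamma> t - \<gamma> 0 - t ^ n *\<^sub>R A - t ^ (n + 1) *\<^sub>R B)"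
    using gamma_exp[OF oI I0 sm _ H1] n2 unfolding A_def B_def by simp
  define r1 where "r1 t = fst (\<gamma> t) - x0 - t ^ n * fst A - t ^ (n + 1) * fst B" for t
  define r2 where "r2 t = snd (\<gamma> t) - y0 - t ^ n * snd A - t ^ (n + 1) * snd B" for t
  have R1: "O0 (n + 2) r1" using O0_fst[OF R] unfolding r1_def x0_def by simp
  have R2: "O0 (n + 2) r2" using O0_snd[OF R] unfolding r2_def y0_def by simp
  have dd: "d = fst A * snd B - snd A * fst B" unfolding d_def det2_def by simp
  have nX: "snd B * (fst (\<gamma> t) - x0) - fst B * (snd (\<gamma> t) - y0) = (snd B * r1 t - fst B * r2 t) + t ^ n * d" for t
    unfolding r1_def r2_def dd by (simp add: algebra_simps)
  have nY: "fst A * (snd (\<gamma> t) - y0) - snd A * (fst (\<gamma> t) - x0) = (fst A * r2 t - snd A * r1 t) + t ^ (n + 1) * d" for t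
    unfolding r1_def r2_def dd by (simp add: algebra_simps)
  have eX1: "X1 t - t ^ n = (snd B / d) * r1 t - (fst B / d) * r2 t" for t
  proof -
    have "X1 t = (snd B * r1 t - fst B * r2 t) / d + t ^ n"
      unfolding X1_def Xf_def nX using d0 by (simp add: add_divide_distrib)
    then show ?thesis by (simp add: diff_divide_distrib)
  qed
  have eY1: "Y1 t - t ^ (n + 1) = (fst A / d) * r2 t - (snd A / d) * r1 t" for t
  proof -
    have "Y1 t = (fst A * r2 t - snd A * r1 t) / d + t ^ (n + 1)"
      unfolding Y1_def Yf_def nY using d0 by (simp add: add_divide_distrib)
    then show ?thesis by (simp add: diff_divide_distrib)
  qed
  have OX1: "O0 (n + 2) (\<lambda>t. X1 t - t ^ n)"
    unfolding eX1 using O0_diff[OF O0_cscale[OF R1, of "snd B / d"] O0_cscale[OF R2, of "fst B / d"]] by simp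
  have OY1: "O0 (n + 2) (\<lambda>t. Y1 t - t ^ (n + 1))"
    unfolding eY1 using O0_diff[OF O0_cscale[OF R2, of "fst A / d"] O0_cscale[OF R1, of "snd A / d"]] by simp
  have sX1: "smooth1 I X1" unfolding X1_def Xf_def
    by (intro smooth1_intros sm)
  have sY1: "smooth1 I Y1" unfolding Y1_def Yf_def
    by (intro smooth1_intros sm)
  obtain b where b: "O0 (Suc (n + 2)) (\<lambda>t. (Y1 t - t ^ (n + 1)) - t ^ (n + 2) *\<^sub>R b)"
    using next_coeff[OF oI I0 _ OY1] smooth1_intros(4)[OF sY1 smooth1_intros(7)] by blast
  define p2 where "p2 = - b / real (n + 1)"
  define S2 where "S2 = {s. rep p2 2 s \<in> I}"
  define X2 where "X2 s = X1 (rep p2 2 s)" for s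
  define Y2 where "Y2 s = Y1 (rep p2 2 s)" for s
  have oS2: "open S2" and S20: "0 \<in> S2" and sX2: "smooth1 S2 X2" and sY2: "smooth1 S2 Y2"
    using step_rep[OF oI I0 sX1, of 2 p2] step_rep[OF oI I0 sY1, of 2 p2]
    unfolding S2_def X2_def Y2_def by auto
  have "O0 (Suc (n + 2)) (\<lambda>t. Y1 t - t ^ (n + 1) - b * t ^ (n + 2))"
    using b by (simp add: mult.commute)
  from active_lem[where p=p2 and j=2, OF this]
  have "O0 (Suc (n + 2)) (\<lambda>s. Y2 s - s ^ (n + 1) - (real (n + 1) * p2 + b) * s ^ (n + 2))"
    unfolding Y2_def by fastforce
  moreover have "real (n + 1) * p2 + b = 0" unfolding p2_def by simp
  ultimately have OY2: "O0 (n + 3) (\<lambda>s. Y2 s - s ^ (n + 1))" by (simp add: eval_nat_numeral)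
  have OX2: "O0 (n + 1) (\<lambda>s. X2 s - s ^ n)"
    using passive_lem[where j=2 and q="n+1" and p=p2, OF OX1] unfolding X2_def by simp
  have sX2n: "smooth1 S2 (\<lambda>s. X2 s - s ^ n)" by (intro smooth1_intros sX2)
  obtain a1 where a1: "O0 (Suc (n + 1)) (\<lambda>s. (X2 s - s ^ n) - s ^ (n + 1) *\<^sub>R a1)"
    using next_coeff[OF oS2 S20 sX2n OX2] by blast
  define X3 where "X3 s = X2 s - a1 * Y2 s" for s
  have sX3: "smooth1 S2 X3" unfolding X3_def by (intro smooth1_intros sX2 sY2)
  have a1': "O0 (n + 2) (\<lambda>s. (X2 s - s ^ n) - s ^ (n + 1) *\<^sub>R a1)" using a1 by simp
  have OY2': "O0 (n + 2) (\<lambda>s. Y2 s - s ^ (n + 1))" by (rule O0_mono[OF _ OY2]) simp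
  have OX3: "O0 (n + 2) (\<lambda>s. X3 s - s ^ n)"
  proof -
    have "O0 (n + 2) (\<lambda>s. ((X2 s - s ^ n) - s ^ (n + 1) *\<^sub>R a1) - a1 *\<^sub>R (Y2 s - s ^ (n + 1)))"
      using O0_diff[OF a1' O0_cscale[OF OY2', where c=a1]] by simp
    then show ?thesis unfolding X3_def by (simp add: algebra_simps)
  qed
  have sX3n: "smooth1 S2 (\<lambda>s. X3 s - s ^ n)" by (intro smooth1_intros sX3)
  obtain a2 where a2: "O0 (Suc (n + 2)) (\<lambda>s. (X3 s - s ^ n) - s ^ (n + 2) *\<^sub>R a2)"
    using next_coeff[OF oS2 S20 sX3n OX3] by blast
  define p4 where "p4 = - a2 / real n"
  define S4 where "S4 = {s. rep p4 3 s \<in> S2}"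
  define X4 where "X4 s = X3 (rep p4 3 s)" for s
  define Y4 where "Y4 s = Y2 (rep p4 3 s)" for s
  have oS4: "open S4" and S40: "0 \<in> S4" and sX4: "smooth1 S4 X4" and sY4: "smooth1 S4 Y4"
    using step_rep[OF oS2 S20 sX3, of 3 p4] step_rep[OF oS2 S20 sY2, of 3 p4]
    unfolding S4_def X4_def Y4_def by auto
  have "O0 (Suc (n + 2)) (\<lambda>t. X3 t - t ^ n - a2 * t ^ (n + 2))"
    using a2 by (simp add: mult.commute)
  from active_lem[where p=p4 and j=3, OF this]
  have "O0 (Suc (n + 2)) (\<lambda>s. X4 s - s ^ n - (real n * p4 + a2) * s ^ (n + 2))"
    unfolding X4_def by simp
  moreover have "real n * p4 + a2 = 0" unfolding p4_def using n2 by simp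
  ultimately have OX4: "O0 (n + 3) (\<lambda>s. X4 s - s ^ n)" by (simp add: eval_nat_numeral)
  have OY4: "O0 (n + 3) (\<lambda>s. Y4 s - s ^ (n + 1))"
    using passive_lem[where j=3 and q="n+3" and p=p4, OF OY2] unfolding Y4_def by simp
  have sX4n: "smooth1 S4 (\<lambda>s. X4 s - s ^ n)" by (intro smooth1_intros sX4)
  obtain a3 where a3: "O0 (Suc (n + 3)) (\<lambda>s. (X4 s - s ^ n) - s ^ (n + 3) *\<^sub>R a3)"
    using next_coeff[OF oS4 S40 sX4n OX4] by blast
  define p5 where "p5 = - a3 / real n"
  define S5 where "S5 = {s. rep p5 4 s \<in> S4}"
  define X5 where "X5 s = X4 (rep p5 4 s)" for s
  define Y5 where "Y5 s = Y4 (rep p5 4 s)" for s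
  have oS5: "open S5" and S50: "0 \<in> S5" and sX5: "smooth1 S5 X5" and sY5: "smooth1 S5 Y5"
    using step_rep[OF oS4 S40 sX4, of 4 p5] step_rep[OF oS4 S40 sY4, of 4 p5]
    unfolding S5_def X5_def Y5_def by auto
  have "O0 (Suc (n + 3)) (\<lambda>t. X4 t - t ^ n - a3 * t ^ (n + 3))"
    using a3 by (simp add: mult.commute)
  from active_lem[where p=p5 and j=4, OF this]
  have "O0 (Suc (n + 3)) (\<lambda>s. X5 s - s ^ n - (real n * p5 + a3) * s ^ (n + 3))"
    unfolding X5_def by simp
  moreover have "real n * p5 + a3 = 0" unfolding p5_def using n2 by simp
  ultimately have OX5: "O0 (n + 4) (\<lambda>s. X5 s - s ^ n)" by (simp add: eval_nat_numeral)
  have OY5: "O0 (n + 3) (\<lambda>s. Y5 s - s ^ (n + 1))"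
    using passive_lem[where j=4 and q="n+3" and p=p5, OF OY4] unfolding Y5_def by simp
  have sY5n: "smooth1 S5 (\<lambda>s. Y5 s - s ^ (n + 1))" by (intro smooth1_intros sY5)
  obtain T where T: "O0 (Suc (n + 3)) (\<lambda>s. (Y5 s - s ^ (n + 1)) - s ^ (n + 3) *\<^sub>R T)"
    using next_coeff[OF oS5 S50 sY5n OY5] by blast
  define h where "h s = (X5 s - s ^ n, Y5 s - s ^ (n + 1) - T * s ^ (n + 3))" for s
  have e4: "Suc (n + 3) = n + 4" by simp
  have fe: "(\<lambda>s. (Y5 s - s ^ (n + 1)) - s ^ (n + 3) *\<^sub>R T) = (\<lambda>s. Y5 s - s ^ (n + 1) - T * s ^ (n + 3))"
    by (simp add: fun_eq_iff)
  have T': "O0 (n + 4) (\<lambda>s. Y5 s - s ^ (n + 1) - T * s ^ (n + 3))" using T unfolding e4 fe .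
  have Oh: "O0 (n + 4) h" unfolding h_def by (rule O0_Pair[OF OX5 T'])
  have sh: "smooth1 S5 h" unfolding h_def by (intro smooth1_intros sX5 sY5)
  have jets: "\<forall>k\<le>n+3. nth_deriv k h 0 = 0"
    using jets_zero[OF oS5 S50 sh Oh] by simp
  have shon: "smooth_on S5 h" using smooth_on_smooth1[OF oS5] sh by blast
  define psii where "psii s = rep p2 2 (rep p4 3 (rep p5 4 s))" for s
  have spsii: "smooth1 UNIV psii"
    unfolding psii_def smooth1_def
  proof
    fix k
    have r: "Ck1 k UNIV (rep p j)" for p j using rep_smooth unfolding smooth1_def by blast
    show "Ck1 k UNIV (\<lambda>s. rep p2 2 (rep p4 3 (rep p5 4 s)))"
      by (rule Ck1_comp[OF r Ck1_comp[OF r r subset_UNIV] subset_UNIV])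
  qed
  have psii0: "psii 0 = 0" unfolding psii_def by (simp add: rep_0)
  have dpsii: "(psii has_real_derivative 1) (at 0)"
  proof -
    have d5: "(rep p5 4 has_real_derivative 1) (at 0)" by (rule rep_deriv) simp
    have d4: "(rep p4 3 has_real_derivative 1) (at (rep p5 4 0))" using rep_deriv[of 3 p4] by (simp add: rep_0)
    have d2: "(rep p2 2 has_real_derivative 1) (at (rep p4 3 (rep p5 4 0)))" using rep_deriv[of 2 p2] by (simp add: rep_0)
    have "((\<lambda>s. rep p4 3 (rep p5 4 s)) has_real_derivative 1 * 1) (at 0)" by (rule DERIV_chain2[OF d4 d5])
    then have "((\<lambda>s. rep p2 2 (rep p4 3 (rep p5 4 s))) has_real_derivative 1 * 1) (at 0)"
      by (intro DERIV_chain2[where g="\<lambda>s. rep p4 3 (rep p5 4 s)" and x=0, OF d2]) simp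
    then show ?thesis unfolding psii_def by simp
  qed
  obtain psi where psi0: "psi 0 = 0" and dpsi: "local_diffeo_at 0 psi psii"
    using ift1[OF spsii psii0 dpsii] by blast
  define \<alpha> where "\<alpha> = (snd B + a1 * snd A) / d"
  define \<beta> where "\<beta> = - (fst B + a1 * fst A) / d"
  define \<alpha>' where "\<alpha>' = - snd A / d"
  define \<beta>' where "\<beta>' = fst A / d"
  define Psi where "Psi = aff \<alpha> \<beta> (- (\<alpha> * x0 + \<beta> * y0)) \<alpha>' \<beta>' (- (\<alpha>' * x0 + \<beta>' * y0))"
  have Psi_eq: "Psi z = (Xf z - a1 * Yf z, Yf z)" for z
    unfolding Psi_def aff_def Xf_def Yf_def \<alpha>_def \<beta>_def \<alpha>'_def \<beta>'_def using d0
    by (simp add: prod_eq_iff field_simps; simp add: algebra_simps)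
  have detPsi: "\<alpha> * \<beta>' - \<beta> * \<alpha>' \<noteq> 0"
  proof -
    have "\<alpha> * \<beta>' - \<beta> * \<alpha>' = ((snd B + a1 * snd A) * fst A - (fst B + a1 * fst A) * snd A) / (d * d)"
      unfolding \<alpha>_def \<beta>_def \<alpha>'_def \<beta>'_def using d0 by (simp add: field_simps)
    also have "(snd B + a1 * snd A) * fst A - (fst B + a1 * fst A) * snd A = d"
      unfolding dd by (simp add: algebra_simps)
    finally have "\<alpha> * \<beta>' - \<beta> * \<alpha>' = 1 / d" using d0 by simp
    then show ?thesis using d0 by simp
  qed
  obtain Psii where dPsi: "local_diffeo_at (\<gamma> 0) Psi Psii"
    using aff_diffeo[OF refl detPsi] unfolding Psi_def by blast
  have key: "Psi (\<gamma> (psii s)) = (s ^ n, s ^ (n + 1) + T * s ^ (n + 3)) + h s" for s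
    unfolding Psi_eq h_def X5_def Y5_def X4_def Y4_def X3_def X2_def Y2_def X1_def Y1_def psii_def
    by simp
  have "A_equiv_at0 \<gamma> (\<lambda>s. (s ^ n, s ^ (n + 1) + T * s ^ (n + 3)) + h s)"
    unfolding A_equiv_at0_def
    using psi0 dpsi dPsi key by (intro exI[of _ psi] exI[of _ psii] exI[of _ Psi] exI[of _ Psii]) auto
  then show ?thesis using oS5 S50 shon jets by blast
qed

lemma smooth_on_plane:
  fixes G :: "real \<times> real \<Rightarrow> real \<times> real"
  assumes "smooth_on V G"
  shows "\<forall>x\<in>V. G differentiable (at x)"
    "\<And>v. smooth_on V (\<lambda>x. frechet_derivative G (at x) v)"
proof -
  have "Ck_on (Suc 0) V G" using assms unfolding smooth_on_def by blast
  then show "\<forall>x\<in>V. G differentiable (at x)" by simp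
  fix v
  have "Ck_on k V (\<lambda>x. frechet_derivative G (at x) v)" for k
    using assms unfolding smooth_on_def by (metis Ck_on.simps(2))
  then show "smooth_on V (\<lambda>x. frechet_derivative G (at x) v)" unfolding smooth_on_def by blast
qed

lemma smooth_comp_plane:
  fixes G :: "real \<times> real \<Rightarrow> 'c::real_normed_vector"
  assumes "smooth_on V G" "smooth1 S F" "F ` S \<subseteq> V"
  shows "smooth1 S (\<lambda>t. G (F t))"
  using assms Ck_on_Ck1_comp unfolding smooth_on_def smooth1_def by blast

lemma O0_bigO_prod:
  fixes f :: "real \<Rightarrow> real" and g :: "real \<Rightarrow> 'b::real_normed_vector"
  shows "O0 a f \<Longrightarrow> O0 b g \<Longrightarrow> c = a + b \<Longrightarrow> O0 c (\<lambda>s. f s *\<^sub>R g s)"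
  using O0_scaleR by blast

lemma backward:
  fixes \<gamma> :: "real \<Rightarrow> real \<times> real" and h :: "real \<Rightarrow> real \<times> real"
  assumes n2: "n \<ge> 2" and oI: "open I" and I0: "0 \<in> I" and sm: "smooth1 I \<gamma>"
    and oJ: "open J" and J0: "0 \<in> J" and shJ: "smooth_on J h" and hj: "\<forall>k\<le>n+3. nth_deriv k h 0 = 0"
    and AE: "A_equiv_at0 \<gamma> (\<lambda>s. (s^n, s^(n+1) + T * s^(n+3)) + h s)"
  shows "(\<forall>k\<in>{1..n-1}. nth_deriv k \<gamma> 0 = 0) \<and>
          det2 (nth_deriv n \<gamma> 0) (nth_deriv (Suc n) \<gamma> 0) \<noteq> 0"
proof -
  define g2 where "g2 s = (s^n, s^(n+1) + T * s^(n+3)) + h s" for s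
  obtain psi psii Psi Psii where psi0: "psi 0 = 0" and ld1: "local_diffeo_at 0 psi psii"
    and ld2: "local_diffeo_at (\<gamma> 0) Psi Psii" and ev: "\<forall>\<^sub>F s in nhds 0. Psi (\<gamma> (psii s)) = g2 s"
    using AE unfolding A_equiv_at0_def g2_def by blast
  obtain U1 V1 where oU1: "open U1" and U10: "0 \<in> U1" and oV1: "open V1" and iU1: "psi ` U1 = V1"
    and iV1: "psii ` V1 = U1" and spsi_on: "smooth_on U1 psi" and spsii_on: "smooth_on V1 psii"
    and inv1: "\<forall>x\<in>U1. psii (psi x) = x" and inv1': "\<forall>y\<in>V1. psi (psii y) = y"
    using ld1 unfolding local_diffeo_at_def by blast
  obtain U2 V2 where oU2: "open U2" and U20: "\<gamma> 0 \<in> U2" and oV2: "open V2" and iU2: "Psi ` U2 = V2"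
    and iV2: "Psii ` V2 = U2" and sPsi: "smooth_on U2 Psi" and sPsii: "smooth_on V2 Psii"
    and inv2: "\<forall>x\<in>U2. Psii (Psi x) = x" and inv2': "\<forall>y\<in>V2. Psi (Psii y) = y"
    using ld2 unfolding local_diffeo_at_def by blast
  obtain N where oN: "open N" and N0: "0 \<in> N" and NN: "\<forall>s\<in>N. Psi (\<gamma> (psii s)) = g2 s"
    using ev unfolding eventually_nhds by blast
  have spsi: "smooth1 U1 psi" using spsi_on smooth_on_smooth1[OF oU1] by blast
  have spsii: "smooth1 V1 psii" using spsii_on smooth_on_smooth1[OF oV1] by blast
  have shJ1: "smooth1 J h" using shJ smooth_on_smooth1[OF oJ] by blast
  have Oh: "O0 (n + 4) h" by (rule jets_O[OF oJ J0 shJ1]) (use hj in auto)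
  have cpsi: "continuous_on U1 psi" using spsi unfolding smooth1_def using Ck1_cont by blast
  have cgam: "continuous_on I \<gamma>" using sm unfolding smooth1_def using Ck1_cont by blast
  define W1 where "W1 = (U1 \<inter> I) \<inter> \<gamma> -` U2"
  have oW1: "open W1"
  proof -
    have c: "continuous_on (U1 \<inter> I) \<gamma>" by (rule continuous_on_subset[OF cgam]) auto
    have "open (\<gamma> -` U2 \<inter> (U1 \<inter> I))"
      using continuous_on_open_vimage[of "U1 \<inter> I" \<gamma>] c oU1 oI oU2 by blast
    then show ?thesis unfolding W1_def by (simp add: Int_commute)
  qed
  define W where "W = W1 \<inter> psi -` N"
  have oW: "open W"
  proof -
    have c: "continuous_on W1 psi" by (rule continuous_on_subset[OF cpsi]) (auto simp: W1_def)
    have "open (psi -` N \<inter> W1)"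
      using continuous_on_open_vimage[of W1 psi] c oW1 oN by blast
    then show ?thesis unfolding W_def by (simp add: Int_commute)
  qed
  have W0: "0 \<in> W" unfolding W_def W1_def using U10 I0 U20 psi0 N0 by auto
  have WI: "W \<subseteq> I" unfolding W_def W1_def by auto
  define F where "F t = Psi (\<gamma> t)" for t
  have FW: "F t = g2 (psi t)" if "t \<in> W" for t
  proof -
    have "psi t \<in> V1" "t \<in> U1" "psi t \<in> N" using that iU1 unfolding W_def W1_def by auto
    then show ?thesis using NN inv1 unfolding F_def by force
  qed
  have FV2: "F t \<in> V2" if "t \<in> W" for t using that iU2 unfolding F_def W_def W1_def by auto
  have gW: "\<gamma> t = Psii (F t)" if "t \<in> W" for t using that inv2 unfolding F_def W_def W1_def by auto
  have sF: "smooth1 W F" unfolding F_def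
    by (rule smooth_comp_plane[OF sPsi smooth1_subset[OF WI sm]]) (auto simp: W_def W1_def)
  obtain \<delta> where \<delta>: "0 < \<delta>" "\<And>s. \<bar>s\<bar> < \<delta> \<Longrightarrow> s \<in> W" using open_ball_sub[OF oW W0] by blast
  define a where "a = nth_deriv 1 psi 0"
  define b where "b = nth_deriv 2 psi 0 / 2"
  have U: "O0 3 (\<lambda>t. psi t - (a * t + b * t ^ 2))"
  proof -
    have T2: "O0 (Suc 2) (\<lambda>t. psi t - (\<Sum>k\<le>2. (t ^ k / fact k) *\<^sub>R nth_deriv k psi 0))"
      by (rule taylor_smooth[OF oU1 U10 spsi])
    have "(\<Sum>k\<le>2. (t ^ k / fact k) *\<^sub>R nth_deriv k psi 0) = a * t + b * t ^ 2" for t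
      unfolding a_def b_def by (simp add: numeral_2_eq_2 psi0 field_simps)
    then show ?thesis using T2 by (simp add: numeral_3_eq_3)
  qed
  have a0: "a \<noteq> 0"
  proof -
    have dpsi: "(psi has_real_derivative a) (at 0)"
      using smooth1_nth[OF oU1 spsi, of 0] U10 unfolding a_def
      by (simp add: has_real_derivative_iff_has_vector_derivative)
    have V10: "0 \<in> V1" using iU1 U10 psi0 by force
    have dpsii: "(psii has_real_derivative nth_deriv 1 psii 0) (at (psi 0))"
      using smooth1_nth[OF oV1 spsii, of 0] V10 psi0
      by (simp add: has_real_derivative_iff_has_vector_derivative)
    have c1: "((\<lambda>t. psii (psi t)) has_real_derivative nth_deriv 1 psii 0 * a) (at 0)"
      by (rule DERIV_chain2[OF dpsii dpsi])
    have c2: "((\<lambda>t. psii (psi t)) has_real_derivative 1) (at 0)"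
      by (rule has_field_derivative_transform_within_open[OF DERIV_ident oU1 U10]) (use inv1 in auto)
    have "nth_deriv 1 psii 0 * a = 1" using DERIV_unique[OF c1 c2] .
    then show ?thesis by auto
  qed
  have psi1: "O0 1 psi"
  proof -
    have "O0 1 (\<lambda>t. (psi t - (a * t + b * t ^ 2)) + (a * t + b * t ^ 2))"
      using O0_add[OF O0_mono[OF _ U] O0_add[OF O0_monom_real[of 1 1 a] O0_monom_real[of 1 2 b]]] by simp
    then show ?thesis by simp
  qed
  have OF1: "O0 (n + 2) (\<lambda>t. fst (F t) - (t ^ n *\<^sub>R a ^ n + t ^ (n + 1) *\<^sub>R (real n * a ^ (n - 1) * b)))"
  proof -
    have u: "O0 (n + 2) (\<lambda>t. psi t ^ n - (a ^ n * t ^ n + real n * a ^ (n - 1) * b * t ^ (n + 1)))"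
      by (rule upow[OF U])
    have hh: "O0 (n + 2) (\<lambda>t. fst (h (psi t)))"
      using O0_mono[OF _ O0_comp[OF O0_fst[OF Oh] psi1]] by simp
    have "O0 (n + 2) (\<lambda>t. (psi t ^ n - (a ^ n * t ^ n + real n * a ^ (n - 1) * b * t ^ (n + 1))) + fst (h (psi t)))"
      by (rule O0_add[OF u hh])
    then have "O0 (n + 2) (\<lambda>t. fst (g2 (psi t)) - (t ^ n *\<^sub>R a ^ n + t ^ (n + 1) *\<^sub>R (real n * a ^ (n - 1) * b)))"
      unfolding g2_def by (simp add: algebra_simps)
    then show ?thesis by (rule O0_cong[OF \<delta>(1), rotated]) (use FW \<delta>(2) in auto)
  qed
  have OF2: "O0 (n + 2) (\<lambda>t. snd (F t) - (t ^ n *\<^sub>R 0 + t ^ (n + 1) *\<^sub>R a ^ (n + 1)))"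
  proof -
    have u: "O0 (n + 2) (\<lambda>t. psi t ^ (n + 1) - (a ^ (n + 1) * t ^ (n + 1) + real (n + 1) * a ^ n * b * t ^ (n + 2)))"
      using O0_mono[OF _ upow[OF U, of "n + 1"]] by simp
    have m: "O0 (n + 2) (\<lambda>t. real (n + 1) * a ^ n * b * t ^ (n + 2))" by (rule O0_monom_real) simp
    have p3: "O0 (n + 2) (\<lambda>t. T * psi t ^ (n + 3))"
      using O0_mono[OF _ O0_cscale[OF O0_pow[OF psi1], where c=T]] by fastforce
    have hh: "O0 (n + 2) (\<lambda>t. snd (h (psi t)))"
      using O0_mono[OF _ O0_comp[OF O0_snd[OF Oh] psi1]] by simp
    have "O0 (n + 2) (\<lambda>t. (psi t ^ (n + 1) - (a ^ (n + 1) * t ^ (n + 1) + real (n + 1) * a ^ n * b * t ^ (n + 2)))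
          + real (n + 1) * a ^ n * b * t ^ (n + 2) + T * psi t ^ (n + 3) + snd (h (psi t)))"
      by (rule O0_add[OF O0_add[OF O0_add[OF u m] p3] hh])
    then have "O0 (n + 2) (\<lambda>t. snd (g2 (psi t)) - (t ^ n *\<^sub>R 0 + t ^ (n + 1) *\<^sub>R a ^ (n + 1)))"
      unfolding g2_def by (simp add: algebra_simps)
    then show ?thesis by (rule O0_cong[OF \<delta>(1), rotated]) (use FW \<delta>(2) in auto)
  qed
  have sF1: "smooth1 W (\<lambda>t. fst (F t))" and sF2: "smooth1 W (\<lambda>t. snd (F t))"
    using sF by (auto intro: smooth1_intros)
  have n1: "1 \<le> n" using n2 by simp
  have dF1: "O0 (n + 1) (\<lambda>t. nth_deriv 1 (\<lambda>t. fst (F t)) t - (t ^ (n - 1) *\<^sub>R (real n *\<^sub>R a ^ n)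
      + t ^ n *\<^sub>R (real (n + 1) *\<^sub>R (real n * a ^ (n - 1) * b))))"
    by (rule deriv_expansion[OF oW W0 sF1 n1 OF1])
  have dF2: "O0 (n + 1) (\<lambda>t. nth_deriv 1 (\<lambda>t. snd (F t)) t - (t ^ (n - 1) *\<^sub>R (real n *\<^sub>R 0)
      + t ^ n *\<^sub>R (real (n + 1) *\<^sub>R a ^ (n + 1))))"
    by (rule deriv_expansion[OF oW W0 sF2 n1 OF2])
  from n2 obtain m where nm: "n = Suc m" and m1: "1 \<le> m" by (cases n) auto
  have Fd: "(F has_vector_derivative nth_deriv 1 F t) (at t)" if "t \<in> W" for t
    using smooth1_nth[OF oW sF, of 0] that by simp
  have F1d: "nth_deriv 1 (\<lambda>t. fst (F t)) t = fst (nth_deriv 1 F t)" if "t \<in> W" for t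
    using nth_deriv_fst(1)[OF Fd[OF that]] .
  have F2d: "nth_deriv 1 (\<lambda>t. snd (F t)) t = snd (nth_deriv 1 F t)" if "t \<in> W" for t
    using nth_deriv_fst(2)[OF Fd[OF that]] .
  have nn: "n + 1 = Suc n" by simp
  have z0: "(0::real) ^ (n - 1) = 0" "(0::real) ^ n = 0" using nm m1 by auto
  have z1: "nth_deriv 1 (\<lambda>t. fst (F t)) 0 = 0"
    using O0_at0[OF dF1[unfolded nn]] z0 by simp
  have z2: "nth_deriv 1 (\<lambda>t. snd (F t)) 0 = 0"
    using O0_at0[OF dF2[unfolded nn]] z0 by simp
  have F'0: "nth_deriv 1 F 0 = 0"
    using z1 z2 F1d[OF W0] F2d[OF W0] by (simp add: prod_eq_iff)
  define G1 where "G1 x = frechet_derivative Psii (at x) (1, 0)" for x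
  define G2 where "G2 x = frechet_derivative Psii (at x) (0, 1)" for x
  have sG1: "smooth_on V2 G1" unfolding G1_def by (rule smooth_on_plane(2)[OF sPsii])
  have sG2: "smooth_on V2 G2" unfolding G2_def by (rule smooth_on_plane(2)[OF sPsii])
  have dPsii: "\<forall>x\<in>V2. Psii differentiable (at x)" by (rule smooth_on_plane(1)[OF sPsii])
  have dG1: "\<forall>x\<in>V2. G1 differentiable (at x)" by (rule smooth_on_plane(1)[OF sG1])
  have dG2: "\<forall>x\<in>V2. G2 differentiable (at x)" by (rule smooth_on_plane(1)[OF sG2])
  define q1 where "q1 t = G1 (F t)" for t
  define q2 where "q2 t = G2 (F t)" for t
  have FWV: "F ` W \<subseteq> V2" using FV2 by auto
  have sq1: "smooth1 W q1" unfolding q1_def by (rule smooth_comp_plane[OF sG1 sF FWV])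
  have sq2: "smooth1 W q2" unfolding q2_def by (rule smooth_comp_plane[OF sG2 sF FWV])
  have Oq: "O0 2 (\<lambda>t. q t - q 0)" if sq: "smooth1 W q" and qd: "(q has_vector_derivative 0) (at 0)"
    for q :: "real \<Rightarrow> real \<times> real"
  proof -
    have T1: "O0 (Suc 1) (\<lambda>t. q t - (\<Sum>k\<le>1. (t ^ k / fact k) *\<^sub>R nth_deriv k q 0))"
      by (rule taylor_smooth[OF oW W0 sq])
    have "nth_deriv 1 q 0 = 0" by (rule nth_deriv_fst(3)[OF qd])
    then show ?thesis using T1 by (simp add: numeral_2_eq_2)
  qed
  have q1d: "(q1 has_vector_derivative 0) (at 0)"
    using plane_chain_vd[of G1 F 0 "nth_deriv 1 F 0"] dG1 FV2[OF W0] Fd[OF W0] F'0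
    unfolding q1_def by simp
  have q2d: "(q2 has_vector_derivative 0) (at 0)"
    using plane_chain_vd[of G2 F 0 "nth_deriv 1 F 0"] dG2 FV2[OF W0] Fd[OF W0] F'0
    unfolding q2_def by simp
  have Oq1: "O0 2 (\<lambda>t. q1 t - q1 0)" by (rule Oq[OF sq1 q1d])
  have Oq2: "O0 2 (\<lambda>t. q2 t - q2 0)" by (rule Oq[OF sq2 q2d])
  have gd: "nth_deriv 1 \<gamma> t = nth_deriv 1 (\<lambda>t. fst (F t)) t *\<^sub>R q1 t + nth_deriv 1 (\<lambda>t. snd (F t)) t *\<^sub>R q2 t"
    if t: "t \<in> W" for t
  proof -
    have "((\<lambda>t. Psii (F t)) has_vector_derivative
       (fst (nth_deriv 1 F t) *\<^sub>R G1 (F t) + snd (nth_deriv 1 F t) *\<^sub>R G2 (F t))) (at t)"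
      using plane_chain_vd[of Psii F t "nth_deriv 1 F t"] dPsii FV2[OF t] Fd[OF t]
      unfolding G1_def G2_def by simp
    then have "(\<gamma> has_vector_derivative
       (fst (nth_deriv 1 F t) *\<^sub>R G1 (F t) + snd (nth_deriv 1 F t) *\<^sub>R G2 (F t))) (at t)"
      by (rule has_vector_derivative_transform_within_open[OF _ oW t]) (use gW in auto)
    then show ?thesis using nth_deriv_fst(3) F1d[OF t] F2d[OF t] unfolding q1_def q2_def by metis
  qed
  define L1 where "L1 = q1 0"
  define L2 where "L2 = q2 0"
  define F1' where "F1' t = nth_deriv 1 (\<lambda>t. fst (F t)) t" for t
  define F2' where "F2' t = nth_deriv 1 (\<lambda>t. snd (F t)) t" for t
  define E1 where "E1 t = t ^ (n - 1) *\<^sub>R (real n *\<^sub>R a ^ n) + t ^ n *\<^sub>R (real (n + 1) *\<^sub>R (real n * a ^ (n - 1) * b))" for t :: real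
  define E2 where "E2 t = t ^ (n - 1) *\<^sub>R (real n *\<^sub>R (0::real)) + t ^ n *\<^sub>R (real (n + 1) *\<^sub>R a ^ (n + 1))" for t :: real
  have dE1: "O0 (n + 1) (\<lambda>t. F1' t - E1 t)" using dF1 unfolding F1'_def E1_def .
  have dE2: "O0 (n + 1) (\<lambda>t. F2' t - E2 t)" using dF2 unfolding F2'_def E2_def .
  have OE1: "O0 (n - 1) E1" unfolding E1_def by (intro O0_add O0_monom) auto
  have OE2: "O0 (n - 1) E2" unfolding E2_def by (intro O0_add O0_monom) auto
  have OF1': "O0 (n - 1) F1'"
    using O0_add[OF O0_mono[OF _ dE1] OE1] by simp
  have OF2': "O0 (n - 1) F2'"
    using O0_add[OF O0_mono[OF _ dE2] OE2] by simp
  have cst: "O0 0 (\<lambda>t. L)" for L :: "real \<times> real" by (rule O0_cont0) simp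
  have Omain: "O0 (n + 1) (\<lambda>t. F1' t *\<^sub>R (q1 t - L1) + F2' t *\<^sub>R (q2 t - L2)
      + (F1' t - E1 t) *\<^sub>R L1 + (F2' t - E2 t) *\<^sub>R L2)"
  proof (intro O0_add)
    show "O0 (n + 1) (\<lambda>t. F1' t *\<^sub>R (q1 t - L1))"
      using O0_scaleR[OF OF1' Oq1] n2 unfolding L1_def by simp
    show "O0 (n + 1) (\<lambda>t. F2' t *\<^sub>R (q2 t - L2))"
      using O0_scaleR[OF OF2' Oq2] n2 unfolding L2_def by simp
    show "O0 (n + 1) (\<lambda>t. (F1' t - E1 t) *\<^sub>R L1)" using O0_scaleR[OF dE1 cst] by simp
    show "O0 (n + 1) (\<lambda>t. (F2' t - E2 t) *\<^sub>R L2)" using O0_scaleR[OF dE2 cst] by simp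
  qed
  define A' where "A' = (real n * a ^ n) *\<^sub>R L1"
  define B' where "B' = (real (n + 1) * (real n * a ^ (n - 1) * b)) *\<^sub>R L1 + (real (n + 1) * a ^ (n + 1)) *\<^sub>R L2"
  have eqW: "nth_deriv 1 \<gamma> t - (t ^ m *\<^sub>R A' + t ^ (m + 1) *\<^sub>R B') =
      F1' t *\<^sub>R (q1 t - L1) + F2' t *\<^sub>R (q2 t - L2) + (F1' t - E1 t) *\<^sub>R L1 + (F2' t - E2 t) *\<^sub>R L2"
    if "t \<in> W" for t
    unfolding gd[OF that] F1'_def[symmetric] F2'_def[symmetric] A'_def B'_def E1_def E2_def nm
    by (simp add: algebra_simps)
  have Og0: "O0 (n + 1) (\<lambda>t. nth_deriv 1 \<gamma> t - (t ^ m *\<^sub>R A' + t ^ (m + 1) *\<^sub>R B'))"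
  proof (rule O0_cong[OF \<delta>(1) _ Omain])
    fix s :: real assume "\<bar>s\<bar> < \<delta>"
    then have "s \<in> W" by (rule \<delta>(2))
    from eqW[OF this] show "F1' s *\<^sub>R (q1 s - L1) + F2' s *\<^sub>R (q2 s - L2) + (F1' s - E1 s) *\<^sub>R L1 + (F2' s - E2 s) *\<^sub>R L2
       = nth_deriv 1 \<gamma> s - (s ^ m *\<^sub>R A' + s ^ (m + 1) *\<^sub>R B')" by (rule sym)
  qed
  have nm2: "n + 1 = m + 2" using nm by simp
  have Og: "O0 (m + 2) (\<lambda>t. nth_deriv 1 \<gamma> t - (t ^ m *\<^sub>R A' + t ^ (m + 1) *\<^sub>R B'))"
    using Og0 unfolding nm2 .
  have sg': "smooth1 I (nth_deriv 1 \<gamma>)" using smooth1_nth[OF oI sm] by blast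
  have co: "(\<forall>k<m. nth_deriv k (nth_deriv 1 \<gamma>) 0 = 0) \<and> nth_deriv m (nth_deriv 1 \<gamma>) 0 = fact m *\<^sub>R A' \<and>
         nth_deriv (m + 1) (nth_deriv 1 \<gamma>) 0 = fact (m + 1) *\<^sub>R B'"
    by (rule two_term_coeff[OF oI I0 sg' Og])
  have part1: "\<forall>k\<in>{1..n-1}. nth_deriv k \<gamma> 0 = 0"
  proof
    fix k assume k: "k \<in> {1..n-1}"
    then obtain k' where kk: "k = Suc k'" "k' < m" using nm by (cases k) auto
    show "nth_deriv k \<gamma> 0 = 0" unfolding kk(1) nth_deriv_Suc'[of k'] using co kk(2) by blast
  qed
  have dn: "nth_deriv n \<gamma> 0 = fact m *\<^sub>R A'" unfolding nm nth_deriv_Suc'[of m] using co by blast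
  have dn1: "nth_deriv (Suc n) \<gamma> 0 = fact (m + 1) *\<^sub>R B'"
    unfolding nm nth_deriv_Suc'[of "Suc m"] using co by simp
  \<comment> \<open>invertibility of the derivative of Psii\<close>
  have dL: "det2 L1 L2 \<noteq> 0"
  proof
    assume "det2 L1 L2 = 0"
    then obtain v where v: "v \<noteq> 0" "fst v *\<^sub>R L1 + snd v *\<^sub>R L2 = 0" using det2_zero_kernel by blast
    define p where "p = F 0"
    have pV: "p \<in> V2" using FV2[OF W0] p_def by simp
    define D where "D = frechet_derivative Psii (at p)"
    have linD: "linear D" unfolding D_def using dPsii pV linear_frechet_derivative by blast
    have Dv: "D v = 0"
    proof -
      have "v = fst v *\<^sub>R (1, 0) + snd v *\<^sub>R (0, 1)" by (simp add: prod_eq_iff)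
      then have "D v = D (fst v *\<^sub>R (1, 0) + snd v *\<^sub>R (0, 1))" by metis
      also have "\<dots> = fst v *\<^sub>R D (1, 0) + snd v *\<^sub>R D (0, 1)"
        by (simp only: linear_add[OF linD] linear_scale[OF linD])
      also have "\<dots> = fst v *\<^sub>R L1 + snd v *\<^sub>R L2"
        unfolding L1_def L2_def q1_def q2_def G1_def G2_def D_def p_def ..
      finally show ?thesis using v(2) by simp
    qed
    have PU: "Psii p \<in> U2" using iV2 pV by blast
    have dPsi: "Psi differentiable (at (Psii p))" using smooth_on_plane(1)[OF sPsi] PU by blast
    define DP where "DP = frechet_derivative Psi (at (Psii p))"
    have linDP: "linear DP" unfolding DP_def using dPsi linear_frechet_derivative by blast
    have h1: "((Psi \<circ> Psii) has_derivative (DP \<circ> D)) (at p)"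
      unfolding DP_def D_def
      by (rule diff_chain_at) (use dPsii pV dPsi frechet_derivative_works in blast)+
    have h2: "((Psi \<circ> Psii) has_derivative (\<lambda>x. x)) (at p)"
      by (rule has_derivative_transform_within_open[OF has_derivative_ident oV2 pV]) (use inv2' in auto)
    have "DP \<circ> D = (\<lambda>x. x)" by (rule has_derivative_unique[OF h1 h2])
    then have "DP (D v) = v" by (metis comp_apply)
    then have "v = 0" using Dv linear_0[OF linDP] by simp
    then show False using v(1) by simp
  qed
  have "det2 (nth_deriv n \<gamma> 0) (nth_deriv (Suc n) \<gamma> 0) =
        fact m * fact (m + 1) * ((real n * a ^ n) * (real (n + 1) * a ^ (n + 1)) * det2 L1 L2)"
    unfolding dn dn1 det2_scale2 A'_def B'_def det2_scale by simp
  moreover have "fact m * fact (m + 1) * ((real n * a ^ n) * (real (n + 1) * a ^ (n + 1)) * det2 L1 L2) \<noteq> (0::real)"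
    using dL a0 nm by simp
  ultimately show ?thesis using part1 by simp
qed

theorem mainTheorem7:
  fixes n :: nat and I :: "real set" and \<gamma> :: "real \<Rightarrow> real \<times> real"
  assumes "n \<ge> 2" and "is_interval I" and "open I" and "0 \<in> I"
    and "smooth_on I \<gamma>"
  shows "((\<forall>k\<in>{1..n-1}. nth_deriv k \<gamma> 0 = 0) \<and>
          det2 (nth_deriv n \<gamma> 0) (nth_deriv (Suc n) \<gamma> 0) \<noteq> 0)
     \<longleftrightarrow> (\<exists>T::real. \<exists>h :: real \<Rightarrow> real \<times> real. \<exists>J.
            open J \<and> 0 \<in> J \<and> smooth_on J h \<and>
            (\<forall>k\<le>n+3. nth_deriv k h 0 = 0) \<and>
            A_equiv_at0 \<gamma> (\<lambda>s. (s^n, s^(n+1) + T * s^(n+3)) + h s))"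
proof -
  have sm: "smooth1 I \<gamma>" using assms(5) smooth_on_smooth1[OF assms(3)] by blast
  show ?thesis
  proof
    assume L: "(\<forall>k\<in>{1..n-1}. nth_deriv k \<gamma> 0 = 0) \<and>
          det2 (nth_deriv n \<gamma> 0) (nth_deriv (Suc n) \<gamma> 0) \<noteq> 0"
    show "\<exists>T::real. \<exists>h :: real \<Rightarrow> real \<times> real. \<exists>J.
            open J \<and> 0 \<in> J \<and> smooth_on J h \<and>
            (\<forall>k\<le>n+3. nth_deriv k h 0 = 0) \<and>
            A_equiv_at0 \<gamma> (\<lambda>s. (s^n, s^(n+1) + T * s^(n+3)) + h s)"
      using forward[OF assms(1) assms(3) assms(4) sm] L by blast
  next
    assume "\<exists>T::real. \<exists>h :: real \<Rightarrow> real \<times> real. \<exists>J.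
            open J \<and> 0 \<in> J \<and> smooth_on J h \<and>
            (\<forall>k\<le>n+3. nth_deriv k h 0 = 0) \<and>
            A_equiv_at0 \<gamma> (\<lambda>s. (s^n, s^(n+1) + T * s^(n+3)) + h s)"
    then obtain T h J where hJ: "open J" "0 \<in> J" "smooth_on J h" "\<forall>k\<le>n+3. nth_deriv k h 0 = 0"
      "A_equiv_at0 \<gamma> (\<lambda>s. (s^n, s^(n+1) + T * s^(n+3)) + h s)" by blast
    show "(\<forall>k\<in>{1..n-1}. nth_deriv k \<gamma> 0 = 0) \<and>
          det2 (nth_deriv n \<gamma> 0) (nth_deriv (Suc n) \<gamma> 0) \<noteq> 0"
      by (rule backward[OF assms(1) assms(3) assms(4) sm hJ])
  qed
qed

end
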